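(* Consider the Markov process described in the context with $K=1$, satisfying Assumption (A) and the ergodicity condition (E), and let $p$ be its equilibrium distribution. For each $x\in\{-1,1\}^c$ let $\beta_{0,x}$ be the root in $(0,1)$ of equation $(\mathrm E_x)$, and for $i=1,\dots,c$ let $\beta_{i,x}=\dfrac{F_i(\beta_{0,x})+x_iR_i(\beta_{0,x})}{2D_i(\beta_{0,x})}$. Then there are real constants $\alpha_x$, $x\in\{-1,1\}^c$ (determined by the equilibrium equations for the states of $V$ and the states $\mathbf n\in W$ with $n_0<K$, and the normalization condition), such that \[p(\mathbf n)=\sum_{x\in\{-1,1\}^c}\alpha_x\,\beta_{0,x}^{n_0}\beta_{1,x}^{n_1}\cdots\beta_{c,x}^{n_c},\qquad \mathbf n\in W.\]
   Context: Fix integers $c\ge 1$ and $K\ge1$ (in the claim $K=1$). Consider an irreducible continuous-time Markov process on $V\cup W$, where $V$ is finite and $W=\{\mathbf n=(n_0,\dots,n_c): n_0\in\{0,1,\dots\},\ n_i\in\{0,1\}\}$. For each $i\in\{1,\dots,c\}$ and integer $k\le K$ there are nonnegative rates $a_{k,i},b_{k,i},c_{k,i},d_{k,i}$. From $\mathbf n\in W$, for each $i$ and $k\in\{-n_0,\dots,K\}$, the process jumps (changing only coordinates $0$ and $i$) from $(n_0,n_i)=(n_0,0)$ to $(n_0+k,1)$ at rate $a_{k,i}$ and to $(n_0+k,0)$ at rate $b_{k,i}$, and from $(n_0,1)$ to $(n_0+k,1)$ at rate $c_{k,i}$ and to $(n_0+k,0)$ at rate $d_{k,i}$; from $\mathbf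 n$ it jumps into $V$ with total rate $\sum_i\sum_{k\le -n_0-1}((1-n_i)(a_{k,i}+b_{k,i})+n_i(c_{k,i}+d_{k,i}))$; no other transitions leave $W$, and from $V$ no transitions go to states with $n_0\ge K$. Let $A_i(z)=\sum_{k=-\infty}^K a_{k,i}z^{K-k}$ and similarly $B_i,C_i,D_i$ with $b,c,d$. Assumption (A): for each $i$: (i) $A_i(1),B_i(1),C_i(1),D_i(1)<\infty$; (ii) $A_i(1),D_i(1)>0$; (iii) $A_i'(1),B_i'(1),C_i'(1),D_i'(1)<\infty$; (iv) $a_{K,i}=0$ or $d_{K,i}=0$; (v) $b_{K,i}=c_{K,i}\ne0$. Ergodicity condition (E): $0<\sum_{i=1}^c\frac{1}{A_i(1)+D_i(1)}\bigl(D_i(1)(A_i'(1)-KA_i(1)+B_i'(1)-KB_i(1))+A_i(1)(C_i'(1)-KC_i(1)+D_i'(1)-KD_i(1))\bigr)$. Let $F_i(z)=z^K(A_i(1)+B_i(1)-C_i(1)-D_i(1))-B_i(z)+C_i(z)$. For real $\beta_0\in[0,1]$ let $R_i(\beta_0)=\sqrt{F_i(\beta_0)^2+4A_i(\beta_0)D_i(\beta_0)}$ (nonnegative square root). For $x\in\{-1,1\}^c$, equation $(\mathrm E_x)$ in the unknown $\beta_0$ is \[0=\sum_{i=1}^c\Bigl(x_iR_i(\beta_0)+B_i(\beta_0)+C_i(\beta_0)-\beta_0^K\bigl(A_i(1)+B_i(1)+C_i(1)+D_i(1)\bigr)\Bigr).\] (When $K=1$, each such equation has exactly one root in $(0,1)$.)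 *)

theory Defs
  imports "HOL-Analysis.Analysis"
begin

text \<open>Rates are functions r :: int => nat => real, r k i = rate r_{k,i} (meaningful for k <= K,
  1 <= i <= c).  States of W are functions n :: nat => nat with n 0 = n_0, n i in {0,1} for
  1 <= i <= c and n i = 0 for i > c.\<close>

definition Wset :: "nat \<Rightarrow> (nat \<Rightarrow> nat) set" where
  "Wset c = {n. (\<forall>i\<in>{1..c}. n i \<le> 1) \<and> (\<forall>i>c. n i = 0)}"

definition state_space :: "'v set \<Rightarrow> nat \<Rightarrow> ('v + (nat \<Rightarrow> nat)) set" where
  "state_space V c = Inl ` V \<union> Inr ` Wset c"

definition sign_vectors :: "nat \<Rightarrow> (nat \<Rightarrow> real) set" where
  "sign_vectors c = {x. (\<forall>i\<in>{1..c}. x i = 1 \<or> x i = -1) \<and> (\<forall>i. i \<notin> {1..c} \<longrightarrow> x i = 0)}"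

text \<open>Generating function R_i(z) = sum_{k <= K} r_{k,i} z^(K-k), and its derivative at 1.\<close>
definition genf :: "nat \<Rightarrow> (int \<Rightarrow> nat \<Rightarrow> real) \<Rightarrow> nat \<Rightarrow> real \<Rightarrow> real" where
  "genf K r i z = (\<Sum>j. r (int K - int j) i * z ^ j)"

definition genf_deriv1 :: "nat \<Rightarrow> (int \<Rightarrow> nat \<Rightarrow> real) \<Rightarrow> nat \<Rightarrow> real" where
  "genf_deriv1 K r i = (\<Sum>j. real j * r (int K - int j) i)"

text \<open>Rate of the individual jump of server i with displacement k, from n_i = u to n_i = v.\<close>
definition jump_rate ::
  "(int \<Rightarrow> nat \<Rightarrow> real) \<Rightarrow> (int \<Rightarrow> nat \<Rightarrow> real) \<Rightarrow> (int \<Rightarrow> nat \<Rightarrow> real) \<Rightarrow> (int \<Rightarrow> nat \<Rightarrow> real)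
     \<Rightarrow> nat \<Rightarrow> int \<Rightarrow> nat \<Rightarrow> nat \<Rightarrow> real" where
  "jump_rate a b cr d i k u v =
     (if u = 0 then (if v = 1 then a k i else b k i) else (if v = 1 then cr k i else d k i))"

definition qW ::
  "nat \<Rightarrow> nat \<Rightarrow> (int \<Rightarrow> nat \<Rightarrow> real) \<Rightarrow> (int \<Rightarrow> nat \<Rightarrow> real) \<Rightarrow> (int \<Rightarrow> nat \<Rightarrow> real)
     \<Rightarrow> (int \<Rightarrow> nat \<Rightarrow> real) \<Rightarrow> (nat \<Rightarrow> nat) \<Rightarrow> (nat \<Rightarrow> nat) \<Rightarrow> real" where
  "qW K c a b cr d n m =
     (\<Sum>i\<in>{1..c}. \<Sum>k\<in>{- int (n 0)..int K}. \<Sum>v\<in>{0,1::nat}.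
        (if m = n(0 := nat (int (n 0) + k), i := v) then jump_rate a b cr d i k (n i) v else 0))"

text \<open>Total rate from n in W into V:
  sum_i sum_{k <= -n_0 - 1} ((1-n_i)(a+b) + n_i(c+d)), with k = -n_0 - 1 - j.\<close>
definition exit_rate ::
  "nat \<Rightarrow> (int \<Rightarrow> nat \<Rightarrow> real) \<Rightarrow> (int \<Rightarrow> nat \<Rightarrow> real) \<Rightarrow> (int \<Rightarrow> nat \<Rightarrow> real)
     \<Rightarrow> (int \<Rightarrow> nat \<Rightarrow> real) \<Rightarrow> (nat \<Rightarrow> nat) \<Rightarrow> real" where
  "exit_rate c a b cr d n =
     (\<Sum>i\<in>{1..c}. \<Sum>j. (let k = - int (n 0) - 1 - int j in
        (1 - real (n i)) * (a k i + b k i) + real (n i) * (cr k i + d k i)))"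

definition irreducible_ctmc :: "'s set \<Rightarrow> ('s \<Rightarrow> 's \<Rightarrow> real) \<Rightarrow> bool" where
  "irreducible_ctmc S q \<longleftrightarrow>
     (\<forall>s\<in>S. \<forall>t\<in>S. (\<lambda>x y. x \<in> S \<and> y \<in> S \<and> x \<noteq> y \<and> q x y > 0)\<^sup>*\<^sup>* s t)"

definition equilibrium_dist :: "'s set \<Rightarrow> ('s \<Rightarrow> 's \<Rightarrow> real) \<Rightarrow> ('s \<Rightarrow> real) \<Rightarrow> bool" where
  "equilibrium_dist S q p \<longleftrightarrow>
     (\<forall>s\<in>S. p s \<ge> 0) \<and> (p has_sum 1) S \<and>
     (\<forall>s\<in>S. (q s) summable_on (S - {s}) \<and> (\<lambda>t. p t * q t s) summable_on (S - {s}) \<and>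
        p s * (\<Sum>\<^sub>\<infinity>t\<in>S - {s}. q s t) = (\<Sum>\<^sub>\<infinity>t\<in>S - {s}. p t * q t s))"

definition Ffun :: "nat \<Rightarrow> (int \<Rightarrow> nat \<Rightarrow> real) \<Rightarrow> (int \<Rightarrow> nat \<Rightarrow> real) \<Rightarrow> (int \<Rightarrow> nat \<Rightarrow> real)
     \<Rightarrow> (int \<Rightarrow> nat \<Rightarrow> real) \<Rightarrow> nat \<Rightarrow> real \<Rightarrow> real" where
  "Ffun K a b cr d i z = z ^ K * (genf K a i 1 + genf K b i 1 - genf K cr i 1 - genf K d i 1)
     - genf K b i z + genf K cr i z"

definition Rfun :: "nat \<Rightarrow> (int \<Rightarrow> nat \<Rightarrow> real) \<Rightarrow> (int \<Rightarrow> nat \<Rightarrow> real) \<Rightarrow> (int \<Rightarrow> nat \<Rightarrow> real)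
     \<Rightarrow> (int \<Rightarrow> nat \<Rightarrow> real) \<Rightarrow> nat \<Rightarrow> real \<Rightarrow> real" where
  "Rfun K a b cr d i z = sqrt ((Ffun K a b cr d i z)\<^sup>2 + 4 * genf K a i z * genf K d i z)"

definition Efun :: "nat \<Rightarrow> nat \<Rightarrow> (int \<Rightarrow> nat \<Rightarrow> real) \<Rightarrow> (int \<Rightarrow> nat \<Rightarrow> real) \<Rightarrow> (int \<Rightarrow> nat \<Rightarrow> real)
     \<Rightarrow> (int \<Rightarrow> nat \<Rightarrow> real) \<Rightarrow> (nat \<Rightarrow> real) \<Rightarrow> real \<Rightarrow> real" where
  "Efun K c a b cr d x z = (\<Sum>i\<in>{1..c}.
      x i * Rfun K a b cr d i z + genf K b i z + genf K cr i z
      - z ^ K * (genf K a i 1 + genf K b i 1 + genf K cr i 1 + genf K d i 1))"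

definition ergodic_cond :: "nat \<Rightarrow> nat \<Rightarrow> (int \<Rightarrow> nat \<Rightarrow> real) \<Rightarrow> (int \<Rightarrow> nat \<Rightarrow> real) \<Rightarrow> (int \<Rightarrow> nat \<Rightarrow> real)
     \<Rightarrow> (int \<Rightarrow> nat \<Rightarrow> real) \<Rightarrow> bool" where
  "ergodic_cond K c a b cr d \<longleftrightarrow>
     0 < (\<Sum>i\<in>{1..c}. 1 / (genf K a i 1 + genf K d i 1) *
        (genf K d i 1 * (genf_deriv1 K a i - real K * genf K a i 1 + genf_deriv1 K b i - real K * genf K b i 1)
       + genf K a i 1 * (genf_deriv1 K cr i - real K * genf K cr i 1 + genf_deriv1 K d i - real K * genf K d i 1)))"

definition assumption_A :: "nat \<Rightarrow> nat \<Rightarrow> (int \<Rightarrow> nat \<Rightarrow> real) \<Rightarrow> (int \<Rightarrow> nat \<Rightarrow> real) \<Rightarrow> (int \<Rightarrow> nat \<Rightarrow> real)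
     \<Rightarrow> (int \<Rightarrow> nat \<Rightarrow> real) \<Rightarrow> bool" where
  "assumption_A K c a b cr d \<longleftrightarrow> (\<forall>i\<in>{1..c}.
     (\<forall>k \<le> int K. a k i \<ge> 0 \<and> b k i \<ge> 0 \<and> cr k i \<ge> 0 \<and> d k i \<ge> 0) \<and>
     (\<forall>r\<in>{a, b, cr, d}. summable (\<lambda>j. r (int K - int j) i)) \<and>
     genf K a i 1 > 0 \<and> genf K d i 1 > 0 \<and>
     (\<forall>r\<in>{a, b, cr, d}. summable (\<lambda>j. real j * r (int K - int j) i)) \<and>
     (a (int K) i = 0 \<or> d (int K) i = 0) \<and>
     b (int K) i = cr (int K) i \<and> b (int K) i \<noteq> 0)"

definition model_process :: "nat \<Rightarrow> nat \<Rightarrow> 'v set \<Rightarrow> (int \<Rightarrow> nat \<Rightarrow> real) \<Rightarrow> (int \<Rightarrow> nat \<Rightarrow> real)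
     \<Rightarrow> (int \<Rightarrow> nat \<Rightarrow> real) \<Rightarrow> (int \<Rightarrow> nat \<Rightarrow> real)
     \<Rightarrow> ('v + (nat \<Rightarrow> nat) \<Rightarrow> 'v + (nat \<Rightarrow> nat) \<Rightarrow> real) \<Rightarrow> bool" where
  "model_process K c V a b cr d q \<longleftrightarrow>
     finite V \<and>
     (\<forall>s\<in>state_space V c. \<forall>t\<in>state_space V c. s \<noteq> t \<longrightarrow> q s t \<ge> 0) \<and>
     (\<forall>n\<in>Wset c. \<forall>m\<in>Wset c. n \<noteq> m \<longrightarrow> q (Inr n) (Inr m) = qW K c a b cr d n m) \<and>
     (\<forall>n\<in>Wset c. (\<Sum>v\<in>V. q (Inr n) (Inl v)) = exit_rate c a b cr d n) \<and>
     (\<forall>v\<in>V. \<forall>m\<in>Wset c. m 0 \<ge> K \<longrightarrow> q (Inl v) (Inr m) = 0) \<and>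
     irreducible_ctmc (state_space V c) q"

end

theory Submission
  imports Defs "HOL-Library.Function_Algebras"
begin

lemma has_sum_sum_fin:
  fixes f :: "'i \<Rightarrow> 'a \<Rightarrow> real"
  assumes "finite I" "\<And>i. i \<in> I \<Longrightarrow> (f i has_sum s i) A"
  shows "((\<lambda>x. \<Sum>i\<in>I. f i x) has_sum (\<Sum>i\<in>I. s i)) A"
  using assms
proof (induction I rule: finite_induct)
  case empty then show ?case by simp
next
  case (insert j I)
  then show ?case by (auto intro!: has_sum_add)
qed

lemma genf_has_sum_gen:
  fixes r :: "int \<Rightarrow> nat \<Rightarrow> real"
  assumes nn: "\<And>k. k \<le> 1 \<Longrightarrow> r k i \<ge> 0" and sm: "summable (\<lambda>j. r (1 - int j) i)"
    and z: "0 \<le> z" "z \<le> 1"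
  shows "((\<lambda>j. r (1 - int j) i * z ^ j) has_sum genf 1 r i z) UNIV"
proof -
  have s: "summable (\<lambda>j. r (1 - int j) i * z ^ j)"
  proof (rule summable_comparison_test[OF _ sm])
    show "\<exists>N. \<forall>n\<ge>N. norm (r (1 - int n) i * z ^ n) \<le> r (1 - int n) i"
      using nn z by (auto intro!: exI[of _ 0] mult_left_le simp: abs_mult power_le_one)
  qed
  have "(\<lambda>j. r (1 - int j) i * z ^ j) sums genf 1 r i z"
    using s by (simp add: genf_def summable_sums)
  then show ?thesis
    by (rule sums_nonneg_imp_has_sum) (use nn z in auto)
qed


locale setting =
  fixes c :: nat and V :: "'v set" and a b cr d :: "int \<Rightarrow> nat \<Rightarrow> real"
    and q :: "'v + (nat \<Rightarrow> nat) \<Rightarrow> 'v + (nat \<Rightarrow> nat) \<Rightarrow> real"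
    and p :: "'v + (nat \<Rightarrow> nat) \<Rightarrow> real" and beta0 :: "(nat \<Rightarrow> real) \<Rightarrow> real"
  assumes c1: "c \<ge> 1" and mp: "model_process 1 c V a b cr d q"
    and AA: "assumption_A 1 c a b cr d"
    and eqd: "equilibrium_dist (state_space V c) q p"
    and roots: "\<forall>x\<in>sign_vectors c. 0 < beta0 x \<and> beta0 x < 1 \<and> Efun 1 c a b cr d x (beta0 x) = 0"
begin

definition rs :: "nat \<Rightarrow> int \<Rightarrow> nat \<Rightarrow> real" where
  "rs i k u = (if u = 0 then a k i + b k i else cr k i + d k i)"
definition tot :: "nat \<Rightarrow> nat \<Rightarrow> real" where
  "tot i u = (if u = 0 then genf 1 a i 1 + genf 1 b i 1 else genf 1 cr i 1 + genf 1 d i 1)"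
definition self :: "nat \<Rightarrow> nat \<Rightarrow> real" where
  "self i u = (if u = 0 then b 0 i else cr 0 i)"

lemma nn: assumes "i \<in> {1..c}" "k \<le> 1"
  shows "a k i \<ge> 0" "b k i \<ge> 0" "cr k i \<ge> 0" "d k i \<ge> 0"
  using AA assms unfolding assumption_A_def by auto

lemma summ: assumes "i \<in> {1..c}"
  shows "summable (\<lambda>j. a (1 - int j) i)" "summable (\<lambda>j. b (1 - int j) i)"
    "summable (\<lambda>j. cr (1 - int j) i)" "summable (\<lambda>j. d (1 - int j) i)"
  using AA assms unfolding assumption_A_def by auto

lemma A1pos: "i \<in> {1..c} \<Longrightarrow> genf 1 a i 1 > 0" and D1pos: "i \<in> {1..c} \<Longrightarrow> genf 1 d i 1 > 0"
  using AA unfolding assumption_A_def by auto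

lemma rs_summable: "i \<in> {1..c} \<Longrightarrow> u \<le> 1 \<Longrightarrow> summable (\<lambda>j. rs i (1 - int j) u)"
  unfolding rs_def using summ[of i] by (cases "u = 0") (auto intro: summable_add)

lemma tot_suminf: "i \<in> {1..c} \<Longrightarrow> u \<le> 1 \<Longrightarrow> tot i u = (\<Sum>j. rs i (1 - int j) u)"
  unfolding rs_def tot_def genf_def using summ[of i]
  by (auto simp: suminf_add)

lemma Wset_upd: "n \<in> Wset c \<Longrightarrow> i \<in> {1..c} \<Longrightarrow> v \<le> 1 \<Longrightarrow> n(0 := l, i := v) \<in> Wset c"
  unfolding Wset_def by auto

lemma tgt_eq: assumes "n \<in> Wset c" "i \<in> {1..c}" "k \<ge> - int (n 0)"
  shows "(n(0 := nat (int (n 0) + k), i := v) = n) \<longleftrightarrow> (k = 0 \<and> v = n i)"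
proof
  assume h: "n(0 := nat (int (n 0) + k), i := v) = n"
  have i0: "i \<noteq> 0" using assms by auto
  from fun_cong[OF h, of 0] i0 have "nat (int (n 0) + k) = n 0" by simp
  then have "k = 0" using assms(3) by linarith
  moreover from fun_cong[OF h, of i] have "v = n i" by simp
  ultimately show "k = 0 \<and> v = n i" by simp
qed auto

lemma has_sum_indicator_pt:
  "((\<lambda>m. if m = t then (r::real) else 0) has_sum (if t \<in> A then r else 0)) A"
proof (cases "t \<in> A")
  case True
  have "((\<lambda>m. if m = t then r else 0) has_sum (\<Sum>m\<in>{t}. if m = t then r else 0)) {t}"
    by (rule has_sum_finite) simp
  then show ?thesis using True
    by (subst has_sum_cong_neutral[where T="{t}"]) auto
next
  case False
  then show ?thesis by (subst has_sum_cong_neutral[where T="{}"]) auto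
qed

definition OUTc :: "(nat \<Rightarrow> nat) \<Rightarrow> real" where
  "OUTc n = (\<Sum>i\<in>{1..c}. tot i (n i) - self i (n i))"

lemma qW_out_has_sum:
  assumes n: "n \<in> Wset c"
  shows "((\<lambda>m. qW 1 c a b cr d n m) has_sum
     (\<Sum>i\<in>{1..c}. (\<Sum>k\<in>{- int (n 0)..1}. rs i k (n i)) - self i (n i))) (Wset c - {n})"
proof -
  let ?t = "\<lambda>i k v. n(0 := nat (int (n 0) + k), i := v)"
  have "((\<lambda>m. qW 1 c a b cr d n m) has_sum
     (\<Sum>i\<in>{1..c}. \<Sum>k\<in>{- int (n 0)..1}. \<Sum>v\<in>{0,1::nat}.
        (if ?t i k v \<in> Wset c - {n} then jump_rate a b cr d i k (n i) v else 0))) (Wset c - {n})"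
    unfolding qW_def of_nat_1
    by (rule has_sum_sum_fin, simp, rule has_sum_sum_fin, simp, rule has_sum_sum_fin, simp, rule has_sum_indicator_pt)
  moreover have "(\<Sum>i\<in>{1..c}. \<Sum>k\<in>{- int (n 0)..1}. \<Sum>v\<in>{0,1::nat}.
        (if ?t i k v \<in> Wset c - {n} then jump_rate a b cr d i k (n i) v else 0))
     = (\<Sum>i\<in>{1..c}. (\<Sum>k\<in>{- int (n 0)..1}. rs i k (n i)) - self i (n i))"
  proof (rule sum.cong[OF refl])
    fix i assume i: "i \<in> {1..c}"
    have ni: "n i \<le> 1" using n i unfolding Wset_def by auto
    have "(\<Sum>k\<in>{- int (n 0)..1}. \<Sum>v\<in>{0,1::nat}.
        (if ?t i k v \<in> Wset c - {n} then jump_rate a b cr d i k (n i) v else 0))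
      = (\<Sum>k\<in>{- int (n 0)..1}. rs i k (n i) - (if k = 0 then self i (n i) else 0))"
    proof (rule sum.cong[OF refl])
      fix k assume k: "k \<in> {- int (n 0)..1}"
      have mem: "?t i k v \<in> Wset c" if "v \<le> 1" for v using Wset_upd[OF n i that] .
      show "(\<Sum>v\<in>{0,1::nat}.
        (if ?t i k v \<in> Wset c - {n} then jump_rate a b cr d i k (n i) v else 0))
          = rs i k (n i) - (if k = 0 then self i (n i) else 0)"
        using tgt_eq[OF n i, of k] k mem ni
        by (cases "n i = 0") (auto simp: jump_rate_def rs_def self_def)
    qed
    also have "\<dots> = (\<Sum>k\<in>{- int (n 0)..1}. rs i k (n i)) - self i (n i)"
      by (simp add: sum_subtractf)
    finally show "(\<Sum>k\<in>{- int (n 0)..1}. \<Sum>v\<in>{0,1::nat}.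
        (if ?t i k v \<in> Wset c - {n} then jump_rate a b cr d i k (n i) v else 0))
      = (\<Sum>k\<in>{- int (n 0)..1}. rs i k (n i)) - self i (n i)" .
  qed
  ultimately show ?thesis by simp
qed

lemma exit_rate_eq:
  assumes n: "n \<in> Wset c"
  shows "exit_rate c a b cr d n = (\<Sum>i\<in>{1..c}. \<Sum>j. rs i (- int (n 0) - 1 - int j) (n i))"
  unfolding exit_rate_def
proof (rule sum.cong[OF refl])
  fix i assume i: "i \<in> {1..c}"
  have "n i \<le> 1" using n i unfolding Wset_def by auto
  then have ni: "n i = 0 \<or> n i = 1" by arith
  then show "(\<Sum>j. let k = - int (n 0) - 1 - int j in
          (1 - real (n i)) * (a k i + b k i) + real (n i) * (cr k i + d k i)) =
         (\<Sum>j. rs i (- int (n 0) - 1 - int j) (n i))"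
    by (elim disjE) (simp_all add: rs_def Let_def)
qed

lemma tot_split:
  assumes i: "i \<in> {1..c}" and u: "u \<le> 1"
  shows "tot i u = (\<Sum>j. rs i (- int m - 1 - int j) u) + (\<Sum>k\<in>{- int m..1}. rs i k u)"
proof -
  have "tot i u = (\<Sum>j. rs i (1 - int (j + (m + 2))) u) + (\<Sum>j<m+2. rs i (1 - int j) u)"
    unfolding tot_suminf[OF i u]
    by (rule suminf_split_initial_segment[OF rs_summable[OF i u]])
  moreover have "(\<lambda>j. rs i (1 - int (j + (m + 2))) u) = (\<lambda>j. rs i (- int m - 1 - int j) u)"
  proof (rule ext)
    fix j
    have "1 - int (j + (m + 2)) = - int m - 1 - int j" by simp
    then show "rs i (1 - int (j + (m + 2))) u = rs i (- int m - 1 - int j) u" by metis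
  qed
  moreover have "(\<Sum>j<m+2. rs i (1 - int j) u) = (\<Sum>k\<in>{- int m..1}. rs i k u)"
    by (rule sum.reindex_bij_witness[where i="\<lambda>k. nat (1 - k)" and j="\<lambda>j. 1 - int j"]) auto
  ultimately show ?thesis by simp
qed

lemma OUT_eq:
  assumes n: "n \<in> Wset c"
  shows "exit_rate c a b cr d n + (\<Sum>\<^sub>\<infinity>m\<in>Wset c - {n}. qW 1 c a b cr d n m) = OUTc n"
proof -
  have "(\<Sum>\<^sub>\<infinity>m\<in>Wset c - {n}. qW 1 c a b cr d n m) =
     (\<Sum>i\<in>{1..c}. (\<Sum>k\<in>{- int (n 0)..1}. rs i k (n i)) - self i (n i))"
    using qW_out_has_sum[OF n] by (rule infsumI)
  moreover have "\<And>i. i \<in> {1..c} \<Longrightarrow> tot i (n i) = (\<Sum>j. rs i (- int (n 0) - 1 - int j) (n i)) + (\<Sum>k\<in>{- int (n 0)..1}. rs i k (n i))"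
    using n unfolding Wset_def by (intro tot_split) auto
  ultimately show ?thesis
    unfolding exit_rate_eq[OF n] OUTc_def
    by (simp add: sum.distrib[symmetric] sum_subtractf)
qed

end

lemma has_sum_remove:
  fixes f :: "'a \<Rightarrow> real"
  assumes "(f has_sum s) A" "x \<in> A"
  shows "(f has_sum (s - f x)) (A - {x})"
proof -
  have "f summable_on (A - {x})"
    using summable_on_cofin_subset[of f A "{x}"] assms by (auto simp: summable_on_def)
  then obtain s' where s': "(f has_sum s') (A - {x})" by (auto simp: summable_on_def)
  have "(f has_sum (f x + s')) (insert x (A - {x}))" by (rule has_sum_insert) (use s' in auto)
  then have "(f has_sum (f x + s')) A" using assms(2) by (simp add: insert_absorb)
  then have "s = f x + s'" using assms(1) has_sum_unique by blast
  then show ?thesis using s' by simp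
qed

context setting
begin

lemma inflow_i:
  fixes z :: real and \<beta> :: "nat \<Rightarrow> real"
  assumes n: "n \<in> Wset c" "n 0 \<ge> 1" and i: "i \<in> {1..c}" and z: "0 \<le> z" "z \<le> 1"
  shows "((\<lambda>m. (z ^ m 0 * (\<Prod>i'\<in>{1..c}. \<beta> i' ^ m i')) *
     (\<Sum>k\<in>{- int (m 0)..1}. \<Sum>v\<in>{0,1::nat}. (if n = m(0 := nat (int (m 0) + k), i := v)
         then jump_rate a b cr d i k (m i) v else 0)))
   has_sum ((\<Prod>i'\<in>{1..c}-{i}. \<beta> i' ^ n i') * z^(n 0 - 1) *
     (if n i = 0 then genf 1 b i z + \<beta> i * genf 1 d i z else genf 1 a i z + \<beta> i * genf 1 cr i z)))
   (Wset c)"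
proof -
  define N where "N = n 0"
  define Tz where "Tz = (\<lambda>m::nat\<Rightarrow>nat. z ^ m 0 * (\<Prod>i'\<in>{1..c}. \<beta> i' ^ m i'))"
  define h where "h = (\<lambda>m::nat\<Rightarrow>nat. \<Sum>k\<in>{- int (m 0)..1}. \<Sum>v\<in>{0,1::nat}.
     (if n = m(0 := nat (int (m 0) + k), i := v) then jump_rate a b cr d i k (m i) v else 0))"
  define Pn where "Pn = (\<Prod>i'\<in>{1..c}-{i}. \<beta> i' ^ n i')"
  define fam where "fam = (\<lambda>u j. n(0 := N - 1 + j, i := u))"
  define rr where "rr = (\<lambda>u::nat. if u = 0 then (if n i = 0 then b else a) else (if n i = 0 then d else cr))"
  have i0: "i \<noteq> 0" and ic: "i \<le> c" "1 \<le> i" using i by auto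
  have ni: "n i \<le> 1" using n i unfolding Wset_def by auto
  have N1: "N \<ge> 1" using n N_def by simp
  have inj: "inj (fam u)" for u
    unfolding inj_def
  proof (intro allI impI)
    fix x y assume h: "fam u x = fam u y"
    show "x = y" using fun_cong[OF h, of 0] i0 unfolding fam_def by simp
  qed
  have disj: "range (fam 0) \<inter> range (fam 1) = {}"
  proof (rule equals0I)
    fix m assume "m \<in> range (fam 0) \<inter> range (fam 1)"
    then obtain x y where "m = fam 0 x" "m = fam 1 y" by blast
    then have "fam 0 x i = fam 1 y i" by simp
    then show False unfolding fam_def by simp
  qed
  have sub: "range (fam u) \<subseteq> Wset c" if "u \<le> 1" for u
    unfolding fam_def using Wset_upd[OF n(1) i that] by auto
  have zero: "h m = 0" if m: "m \<in> Wset c" "m \<notin> range (fam 0) \<union> range (fam 1)" for m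
  proof (rule ccontr)
    assume hm: "h m \<noteq> 0"
    have "\<exists>k\<in>{- int (m 0)..1}. \<exists>v\<in>{0,1::nat}. n = m(0 := nat (int (m 0) + k), i := v)"
    proof (rule ccontr)
      assume "\<not> ?thesis"
      then have "h m = 0" unfolding h_def by (intro sum.neutral ballI) auto
      then show False using hm by simp
    qed
    then obtain k v where k: "k \<in> {- int (m 0)..1}" and v: "v \<in> {0,1::nat}"
       and eq: "n = m(0 := nat (int (m 0) + k), i := v)" by blast
    have mi: "m i \<le> 1" using m i unfolding Wset_def by auto
    have "N = nat (int (m 0) + k)" using fun_cong[OF eq, of 0] i0 N_def by simp
    then have "int N = int (m 0) + k" using k by auto
    then have m0: "N - 1 + (m 0 + 1 - N) = m 0" using k N1 by arith
    have "fam (m i) (m 0 + 1 - N) = m"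
    proof
      fix j show "fam (m i) (m 0 + 1 - N) j = m j"
        using fun_cong[OF eq, of j] m0 unfolding fam_def by (cases "j = 0"; cases "j = i") auto
    qed
    moreover have "m i = 0 \<or> m i = 1" using mi by arith
    ultimately have "m \<in> range (fam 0) \<union> range (fam 1)" by (metis UnI1 UnI2 rangeI)
    then show False using m(2) by simp
  qed
  have val: "h (fam u j) = rr u (1 - int j) i" if u: "u \<le> 1" for u j
  proof -
    have f0: "fam u j 0 = N - 1 + j" and fi: "fam u j i = u" unfolding fam_def using i0 by auto
    have cond: "(n = (fam u j)(0 := nat (int (fam u j 0) + k), i := v)) \<longleftrightarrow> (k = 1 - int j \<and> v = n i)"
      if "k \<in> {- int (fam u j 0)..1}" for k v
    proof
      assume eq: "n = (fam u j)(0 := nat (int (fam u j 0) + k), i := v)"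
      have "N = nat (int (N - 1 + j) + k)" using fun_cong[OF eq, of 0] i0 f0 N_def by simp
      then have "k = 1 - int j" using that N1 f0 by auto
      moreover have "v = n i" using fun_cong[OF eq, of i] by simp
      ultimately show "k = 1 - int j \<and> v = n i" by simp
    next
      assume "k = 1 - int j \<and> v = n i"
      then show "n = (fam u j)(0 := nat (int (fam u j 0) + k), i := v)"
        using N1 unfolding fam_def N_def by (auto simp: fun_eq_iff)
    qed
    have "h (fam u j) = (\<Sum>k\<in>{- int (fam u j 0)..1}. \<Sum>v\<in>{0,1::nat}.
        (if k = 1 - int j \<and> v = n i then jump_rate a b cr d i k u v else 0))"
      unfolding h_def fi by (intro sum.cong refl) (use cond in auto)
    also have "\<dots> = (\<Sum>k\<in>{- int (fam u j 0)..1}. if k = 1 - int j then jump_rate a b cr d i k u (n i) else 0)"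
      using ni by (intro sum.cong refl) (auto simp: le_Suc_eq)
    also have "\<dots> = jump_rate a b cr d i (1 - int j) u (n i)"
      using f0 N1 by (subst sum.delta) auto
    also have "\<dots> = rr u (1 - int j) i"
      using u ni unfolding rr_def jump_rate_def by (auto simp: le_Suc_eq)
    finally show ?thesis .
  qed
  have Tv: "Tz (fam u j) = z ^ (N - 1) * \<beta> i ^ u * Pn * z ^ j" for u j
  proof -
    have "(\<Prod>i'\<in>{1..c}. \<beta> i' ^ fam u j i') = \<beta> i ^ fam u j i * (\<Prod>i'\<in>{1..c}-{i}. \<beta> i' ^ fam u j i')"
      using i by (subst prod.remove) auto
    also have "(\<Prod>i'\<in>{1..c}-{i}. \<beta> i' ^ fam u j i') = Pn"
      unfolding Pn_def fam_def by (intro prod.cong refl) auto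
    finally show ?thesis unfolding Tz_def using i0 by (simp add: fam_def power_add)
  qed
  have rr_nn: "\<And>k. k \<le> 1 \<Longrightarrow> rr u k i \<ge> 0" for u
    unfolding rr_def using nn[OF i] by auto
  have rr_sm: "summable (\<lambda>j. rr u (1 - int j) i)" for u
    unfolding rr_def using summ[OF i] by auto
  have hs_u: "((\<lambda>m. Tz m * h m) has_sum (z ^ (N - 1) * \<beta> i ^ u * Pn * genf 1 (rr u) i z)) (range (fam u))"
    if u: "u \<le> 1" for u
  proof -
    have "((\<lambda>j. z ^ (N - 1) * \<beta> i ^ u * Pn * (rr u (1 - int j) i * z ^ j)) has_sum
        (z ^ (N - 1) * \<beta> i ^ u * Pn * genf 1 (rr u) i z)) UNIV"
      by (intro has_sum_cmult_right genf_has_sum_gen rr_nn rr_sm z)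
    then have "(((\<lambda>m. Tz m * h m) \<circ> fam u) has_sum (z ^ (N - 1) * \<beta> i ^ u * Pn * genf 1 (rr u) i z)) UNIV"
      by (rule has_sum_cong[THEN iffD1, rotated]) (simp add: Tv val[OF u] algebra_simps)
    then show ?thesis by (subst has_sum_reindex[OF inj])
  qed
  have "((\<lambda>m. Tz m * h m) has_sum (z ^ (N - 1) * \<beta> i ^ 0 * Pn * genf 1 (rr 0) i z
          + z ^ (N - 1) * \<beta> i ^ 1 * Pn * genf 1 (rr 1) i z)) (range (fam 0) \<union> range (fam 1))"
    by (rule has_sum_Un_disjoint[OF hs_u hs_u disj]) auto
  then have "((\<lambda>m. Tz m * h m) has_sum (z ^ (N - 1) * \<beta> i ^ 0 * Pn * genf 1 (rr 0) i z
          + z ^ (N - 1) * \<beta> i ^ 1 * Pn * genf 1 (rr 1) i z)) (Wset c)"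
    by (rule has_sum_cong_neutral[THEN iffD1, rotated -1]) (use zero sub[of 0] sub[of 1] in auto)
  moreover have "z ^ (N - 1) * \<beta> i ^ 0 * Pn * genf 1 (rr 0) i z
          + z ^ (N - 1) * \<beta> i ^ 1 * Pn * genf 1 (rr 1) i z =
      Pn * z^(N - 1) * (if n i = 0 then genf 1 b i z + \<beta> i * genf 1 d i z else genf 1 a i z + \<beta> i * genf 1 cr i z)"
    unfolding rr_def by (simp add: algebra_simps)
  ultimately show ?thesis unfolding Tz_def h_def Pn_def N_def by simp
qed

lemma h_self:
  assumes n: "n \<in> Wset c" and i: "i \<in> {1..c}"
  shows "(\<Sum>k\<in>{- int (n 0)..1}. \<Sum>v\<in>{0,1::nat}. (if n = n(0 := nat (int (n 0) + k), i := v)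
         then jump_rate a b cr d i k (n i) v else 0)) = self i (n i)"
proof -
  have ni: "n i \<le> 1" using n i unfolding Wset_def by auto
  have "(\<Sum>k\<in>{- int (n 0)..1}. \<Sum>v\<in>{0,1::nat}. (if n = n(0 := nat (int (n 0) + k), i := v)
         then jump_rate a b cr d i k (n i) v else 0)) =
     (\<Sum>k\<in>{- int (n 0)..1}. \<Sum>v\<in>{0,1::nat}. (if k = 0 \<and> v = n i
         then jump_rate a b cr d i k (n i) v else 0))"
  proof (intro sum.cong refl)
    fix k v assume k: "k \<in> {- int (n 0)..1}"
    have "(n = n(0 := nat (int (n 0) + k), i := v)) = (k = 0 \<and> v = n i)"
      using tgt_eq[OF n i, of k v] k by auto
    then show "(if n = n(0 := nat (int (n 0) + k), i := v) then jump_rate a b cr d i k (n i) v else 0) =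
      (if k = 0 \<and> v = n i then jump_rate a b cr d i k (n i) v else 0)" by (simp only:)
  qed
  also have "\<dots> = (\<Sum>k\<in>{- int (n 0)..1}. if k = 0 then jump_rate a b cr d i k (n i) (n i) else 0)"
    using ni by (intro sum.cong refl) (auto simp: le_Suc_eq)
  also have "\<dots> = jump_rate a b cr d i 0 (n i) (n i)" by (subst sum.delta) auto
  also have "\<dots> = self i (n i)" unfolding jump_rate_def self_def using ni by (auto simp: le_Suc_eq)
  finally show ?thesis .
qed

end

lemma genf_pos_gen:
  fixes r :: "int \<Rightarrow> nat \<Rightarrow> real"
  assumes nn: "\<And>k. k \<le> 1 \<Longrightarrow> r k i \<ge> 0" and sm: "summable (\<lambda>j. r (1 - int j) i)"
    and pos: "genf 1 r i 1 > 0" and z: "0 < z" "z \<le> 1"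
  shows "genf 1 r i z > 0"
proof -
  obtain j where j: "r (1 - int j) i > 0"
  proof (rule ccontr)
    assume "\<not> thesis"
    have "r (1 - int j) i = 0" for j
    proof -
      have "r (1 - int j) i \<ge> 0" by (rule nn) simp
      moreover have "\<not> r (1 - int j) i > 0" using that \<open>\<not> thesis\<close> by blast
      ultimately show ?thesis by simp
    qed
    then have "genf 1 r i 1 = 0" unfolding genf_def by simp
    then show False using pos by simp
  qed
  have "(\<Sum>j'\<in>{j}. r (1 - int j') i * z ^ j') \<le> genf 1 r i z"
    by (rule finite_sum_le_has_sum[OF genf_has_sum_gen[where r=r and i=i, OF nn sm]]) (use z nn in auto)
  moreover have "r (1 - int j) i * z ^ j > 0" using j z by simp
  ultimately show ?thesis by simp
qed

lemma genf_nonneg_gen: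
  fixes r :: "int \<Rightarrow> nat \<Rightarrow> real"
  assumes nn: "\<And>k. k \<le> 1 \<Longrightarrow> r k i \<ge> 0" and sm: "summable (\<lambda>j. r (1 - int j) i)"
    and z: "0 \<le> z" "z \<le> 1"
  shows "genf 1 r i z \<ge> 0"
  by (rule has_sum_nonneg[OF genf_has_sum_gen[where r=r and i=i, OF nn sm z]]) (use nn z in auto)

lemma quad_root:
  fixes A D F R xi \<beta> :: real
  assumes D: "D > 0" and A: "A \<ge> 0" and R: "R = sqrt (F\<^sup>2 + 4 * A * D)"
    and xi: "xi = 1 \<or> xi = -1" and b: "\<beta> = (F + xi * R) / (2 * D)"
  shows "D * \<beta>\<^sup>2 - F * \<beta> - A = 0"
proof -
  have e: "2 * D * \<beta> - F = xi * R" using b D by (simp add: field_simps)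
  have "R\<^sup>2 = F\<^sup>2 + 4 * A * D" using R A D by simp
  moreover have "(xi * R)\<^sup>2 = R\<^sup>2" using xi by (auto simp: power2_eq_square)
  ultimately have "(2 * D * \<beta> - F)\<^sup>2 = F\<^sup>2 + 4 * A * D" using e by simp
  then have "4 * D * (D * \<beta>\<^sup>2 - F * \<beta> - A) = 0" by (simp add: algebra_simps power2_eq_square)
  then show ?thesis using D by simp
qed

context setting
begin

definition bet :: "(nat \<Rightarrow> real) \<Rightarrow> nat \<Rightarrow> real" where
  "bet x i = (Ffun 1 a b cr d i (beta0 x) + x i * Rfun 1 a b cr d i (beta0 x)) / (2 * genf 1 d i (beta0 x))"
definition Tc :: "(nat \<Rightarrow> real) \<Rightarrow> (nat \<Rightarrow> nat) \<Rightarrow> real" where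
  "Tc x n = beta0 x ^ n 0 * (\<Prod>i\<in>{1..c}. bet x i ^ n i)"
definition gam :: "(nat \<Rightarrow> real) \<Rightarrow> nat \<Rightarrow> real" where
  "gam x i = beta0 x * tot i 0 - genf 1 b i (beta0 x) - bet x i * genf 1 d i (beta0 x)"

lemma genf_pos:
  assumes i: "i \<in> {1..c}" and z: "0 < z" "z \<le> 1"
  shows "genf 1 a i z > 0" "genf 1 d i z > 0"
  using genf_pos_gen[OF nn(1)[OF i] summ(1)[OF i] A1pos[OF i] z]
    genf_pos_gen[OF nn(4)[OF i] summ(4)[OF i] D1pos[OF i] z] by auto

lemma genf_nonneg:
  assumes i: "i \<in> {1..c}" and z: "0 \<le> z" "z \<le> 1"
  shows "genf 1 a i z \<ge> 0" "genf 1 b i z \<ge> 0" "genf 1 cr i z \<ge> 0" "genf 1 d i z \<ge> 0"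
  using genf_nonneg_gen[where r=a and i=i, OF nn(1)[OF i] summ(1)[OF i] z]
    genf_nonneg_gen[where r=b and i=i, OF nn(2)[OF i] summ(2)[OF i] z]
    genf_nonneg_gen[where r=cr and i=i, OF nn(3)[OF i] summ(3)[OF i] z]
    genf_nonneg_gen[where r=d and i=i, OF nn(4)[OF i] summ(4)[OF i] z] by auto

lemma sv_val: "x \<in> sign_vectors c \<Longrightarrow> i \<in> {1..c} \<Longrightarrow> x i = 1 \<or> x i = -1"
  unfolding sign_vectors_def by auto

lemma bet_quad:
  assumes x: "x \<in> sign_vectors c" and i: "i \<in> {1..c}"
  shows "genf 1 d i (beta0 x) * (bet x i)\<^sup>2 - Ffun 1 a b cr d i (beta0 x) * bet x i - genf 1 a i (beta0 x) = 0"
proof -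
  have z: "0 < beta0 x" "beta0 x \<le> 1" using roots x by auto
  show ?thesis
    by (rule quad_root[where R="Rfun 1 a b cr d i (beta0 x)" and xi="x i"])
      (use genf_pos[OF i z] genf_nonneg[OF i less_imp_le[OF z(1)] z(2)] sv_val[OF x i] in
        \<open>auto simp: Rfun_def bet_def\<close>)
qed

lemma gam_sum: assumes x: "x \<in> sign_vectors c" shows "(\<Sum>i\<in>{1..c}. gam x i) = 0"
proof -
  have z: "0 < beta0 x" "beta0 x \<le> 1" using roots x by auto
  have "2 * gam x i = - (x i * Rfun 1 a b cr d i (beta0 x) + genf 1 b i (beta0 x) + genf 1 cr i (beta0 x)
      - beta0 x ^ 1 * (genf 1 a i 1 + genf 1 b i 1 + genf 1 cr i 1 + genf 1 d i 1))"
    if i: "i \<in> {1..c}" for i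
  proof -
    have D: "genf 1 d i (beta0 x) > 0" using genf_pos[OF i z] by simp
    have "bet x i * genf 1 d i (beta0 x) = (Ffun 1 a b cr d i (beta0 x) + x i * Rfun 1 a b cr d i (beta0 x)) / 2"
      using D unfolding bet_def by (simp add: field_simps)
    then show ?thesis unfolding gam_def tot_def Ffun_def by (simp add: algebra_simps)
  qed
  then have "2 * (\<Sum>i\<in>{1..c}. gam x i) = - Efun 1 c a b cr d x (beta0 x)"
    unfolding Efun_def sum_distrib_left by (simp add: sum_negf[symmetric])
  then show ?thesis using roots x by simp
qed

lemma coord_identity:
  assumes x: "x \<in> sign_vectors c" and i: "i \<in> {1..c}" and u: "u \<le> 1" and N: "N \<ge> 1"
  shows "Pn * beta0 x ^ (N - 1) * (if u = 0 then genf 1 b i (beta0 x) + bet x i * genf 1 d i (beta0 x)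
       else genf 1 a i (beta0 x) + bet x i * genf 1 cr i (beta0 x))
     = (beta0 x ^ N * bet x i ^ u * Pn) * tot i u - (bet x i ^ u * Pn) * beta0 x ^ (N - 1) * gam x i"
proof -
  have zN: "beta0 x ^ N = beta0 x * beta0 x ^ (N - 1)" using N by (simp add: power_eq_if)
  show ?thesis
  proof (cases "u = 0")
    case True then show ?thesis unfolding gam_def zN by (simp add: algebra_simps)
  next
    case False
    then have u1: "u = 1" using u by simp
    have q: "genf 1 d i (beta0 x) * (bet x i)\<^sup>2 - Ffun 1 a b cr d i (beta0 x) * bet x i - genf 1 a i (beta0 x) = 0"
      by (rule bet_quad[OF x i])
    have "bet x i * (beta0 x * tot i 1 - beta0 x * tot i 0 + genf 1 b i (beta0 x) + bet x i * genf 1 d i (beta0 x))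
        = genf 1 a i (beta0 x) + bet x i * genf 1 cr i (beta0 x)"
      using q unfolding Ffun_def tot_def by (simp add: algebra_simps power2_eq_square)
    then have "Pn * beta0 x ^ (N - 1) * (bet x i * (beta0 x * tot i 1 - beta0 x * tot i 0 + genf 1 b i (beta0 x) + bet x i * genf 1 d i (beta0 x)))
        = Pn * beta0 x ^ (N - 1) * (genf 1 a i (beta0 x) + bet x i * genf 1 cr i (beta0 x))" by simp
    then show ?thesis unfolding gam_def zN u1 by (simp add: algebra_simps)
  qed
qed

lemma cand_balance:
  assumes x: "x \<in> sign_vectors c" and n: "n \<in> Wset c" "n 0 \<ge> 1"
  shows "((\<lambda>m. Tc x m * qW 1 c a b cr d m n) has_sum (Tc x n * OUTc n)) (Wset c - {n})"
proof -
  define z where "z = beta0 x"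
  have z: "0 \<le> z" "z \<le> 1" using roots x unfolding z_def by auto
  define h where "h = (\<lambda>i (m::nat\<Rightarrow>nat). \<Sum>k\<in>{- int (m 0)..1}. \<Sum>v\<in>{0,1::nat}. (if n = m(0 := nat (int (m 0) + k), i := v)
         then jump_rate a b cr d i k (m i) v else 0))"
  define X where "X = (\<lambda>i. (\<Prod>i'\<in>{1..c}-{i}. bet x i' ^ n i') * z^(n 0 - 1) *
     (if n i = 0 then genf 1 b i z + bet x i * genf 1 d i z else genf 1 a i z + bet x i * genf 1 cr i z))"
  have qWs: "qW 1 c a b cr d m n = (\<Sum>i\<in>{1..c}. h i m)" for m
    unfolding qW_def h_def of_nat_1 ..
  have "((\<lambda>m. \<Sum>i\<in>{1..c}. Tc x m * h i m) has_sum (\<Sum>i\<in>{1..c}. X i)) (Wset c)"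
  proof (rule has_sum_sum_fin)
    fix i assume i: "i \<in> {1..c}"
    show "((\<lambda>m. Tc x m * h i m) has_sum X i) (Wset c)"
      using inflow_i[OF n i z, of "bet x"] unfolding Tc_def h_def X_def z_def .
  qed simp
  then have hs: "((\<lambda>m. Tc x m * qW 1 c a b cr d m n) has_sum (\<Sum>i\<in>{1..c}. X i)) (Wset c)"
    unfolding qWs sum_distrib_left .
  have qnn: "qW 1 c a b cr d n n = (\<Sum>i\<in>{1..c}. self i (n i))"
    unfolding qWs h_def using h_self[OF n(1)] by (intro sum.cong refl) auto
  have Xi: "X i = Tc x n * tot i (n i) - (\<Prod>i'\<in>{1..c}. bet x i' ^ n i') * z ^ (n 0 - 1) * gam x i"
    if i: "i \<in> {1..c}" for i
  proof -
    have ni: "n i \<le> 1" using n i unfolding Wset_def by auto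
    have P: "(\<Prod>i'\<in>{1..c}. bet x i' ^ n i') = bet x i ^ n i * (\<Prod>i'\<in>{1..c}-{i}. bet x i' ^ n i')"
      using i by (subst prod.remove) auto
    show ?thesis
      unfolding X_def z_def Tc_def P
      using coord_identity[OF x i ni n(2), of "\<Prod>i'\<in>{1..c}-{i}. bet x i' ^ n i'"]
      by (simp add: algebra_simps)
  qed
  have "(\<Sum>i\<in>{1..c}. X i) - Tc x n * qW 1 c a b cr d n n = Tc x n * OUTc n"
    unfolding qnn OUTc_def
    using gam_sum[OF x] Xi
    by (simp add: sum_subtractf sum_distrib_left[symmetric] right_diff_distrib)
  with has_sum_remove[OF hs n(1)] show ?thesis by simp
qed

end

lemma has_sum_diff_real:
  fixes f g :: "'a \<Rightarrow> real"
  assumes "(f has_sum a) A" "(g has_sum b) A"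
  shows "((\<lambda>x. f x - g x) has_sum (a - b)) A"
  using has_sum_add[OF assms(1) has_sum_uminusI[OF assms(2)]] by simp

context setting
begin

lemma qW_nn: "qW 1 c a b cr d n m \<ge> 0"
  unfolding qW_def jump_rate_def using nn
  by (intro sum_nonneg) auto

lemma qW_nn': "qW (Suc 0) c a b cr d n m \<ge> 0"
  using qW_nn by (metis One_nat_def)

lemma abs_qW[simp]: "\<bar>qW 1 c a b cr d n m\<bar> = qW 1 c a b cr d n m" "\<bar>qW (Suc 0) c a b cr d n m\<bar> = qW (Suc 0) c a b cr d n m"
  using qW_nn qW_nn' by auto

lemma mp_facts:
  shows "finite V"
    and "\<And>s t. s \<in> state_space V c \<Longrightarrow> t \<in> state_space V c \<Longrightarrow> s \<noteq> t \<Longrightarrow> q s t \<ge> 0"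
    and "\<And>n m. n \<in> Wset c \<Longrightarrow> m \<in> Wset c \<Longrightarrow> n \<noteq> m \<Longrightarrow> q (Inr n) (Inr m) = qW 1 c a b cr d n m"
    and "\<And>n. n \<in> Wset c \<Longrightarrow> (\<Sum>v\<in>V. q (Inr n) (Inl v)) = exit_rate c a b cr d n"
    and "\<And>v m. v \<in> V \<Longrightarrow> m \<in> Wset c \<Longrightarrow> m 0 \<ge> 1 \<Longrightarrow> q (Inl v) (Inr m) = 0"
    and "irreducible_ctmc (state_space V c) q"
  using mp unfolding model_process_def by auto

lemma q_Inr_Inl_nn: "n \<in> Wset c \<Longrightarrow> v \<in> V \<Longrightarrow> q (Inr n) (Inl v) \<ge> 0"
  by (rule mp_facts(2)) (auto simp: state_space_def)

lemma exit_nn: "n \<in> Wset c \<Longrightarrow> exit_rate c a b cr d n \<ge> 0"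
  using mp_facts(4)[of n, symmetric] q_Inr_Inl_nn[of n] by (auto intro!: sum_nonneg)

lemma qW_hs: "n \<in> Wset c \<Longrightarrow> ((\<lambda>m. qW 1 c a b cr d n m) has_sum (OUTc n - exit_rate c a b cr d n)) (Wset c - {n})"
proof -
  assume n: "n \<in> Wset c"
  note hs = qW_out_has_sum[OF n]
  have eq: "OUTc n - exit_rate c a b cr d n = (\<Sum>i\<in>{1..c}. (\<Sum>k\<in>{- int (n 0)..1}. rs i k (n i)) - self i (n i))"
    using OUT_eq[OF n] infsumI[OF hs] by simp
  show ?thesis unfolding eq by (rule hs)
qed

definition Bd :: real where "Bd = (\<Sum>i\<in>{1..c}. tot i 0 + tot i 1)"

lemma tot_nn: "i \<in> {1..c} \<Longrightarrow> tot i u \<ge> 0"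
  unfolding tot_def using genf_nonneg[of i 1] by auto

lemma OUTc_bound: assumes n: "n \<in> Wset c" shows "OUTc n \<le> Bd" "OUTc n \<ge> 0"
proof -
  show "OUTc n \<le> Bd" unfolding OUTc_def Bd_def
  proof (rule sum_mono)
    fix i assume i: "i \<in> {1..c}"
    have "self i (n i) \<ge> 0" unfolding self_def using nn[OF i, of 0] by auto
    moreover have "tot i (n i) \<le> tot i 0 + tot i 1" using tot_nn[OF i, of 0] tot_nn[OF i, of 1]
      by (cases "n i = 0") (auto simp: tot_def)
    ultimately show "tot i (n i) - self i (n i) \<le> tot i 0 + tot i 1" by simp
  qed
  have "OUTc n - exit_rate c a b cr d n \<ge> 0"
    by (rule has_sum_nonneg[OF qW_hs[OF n]]) (rule qW_nn)
  then show "OUTc n \<ge> 0" using exit_nn[OF n] by simp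
qed

lemma uniqueness:
  fixes e :: "(nat \<Rightarrow> nat) \<Rightarrow> real"
  assumes esum: "e summable_on Wset c"
    and e0: "\<And>n. n \<in> Wset c \<Longrightarrow> n 0 = 0 \<Longrightarrow> e n = 0"
    and ebal: "\<And>n. n \<in> Wset c \<Longrightarrow> n 0 \<ge> 1 \<Longrightarrow>
       ((\<lambda>m. e m * qW 1 c a b cr d m n) has_sum (e n * OUTc n)) (Wset c - {n})"
  shows "\<And>n. n \<in> Wset c \<Longrightarrow> e n = 0"
proof -
  define W where "W = Wset c"
  define S1 where "S1 = {m \<in> W. m 0 \<ge> 1}"
  define u where "u = (\<lambda>m. \<bar>e m\<bar>)"
  define out1 where "out1 = (\<lambda>m. \<Sum>\<^sub>\<infinity>n\<in>S1 - {m}. qW 1 c a b cr d m n)"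
  define In where "In = (\<lambda>n. if n \<in> S1 then \<Sum>\<^sub>\<infinity>m\<in>W - {n}. u m * qW 1 c a b cr d m n else 0)"
  define G where "G = (\<lambda>(m, n). if n \<in> S1 \<and> n \<noteq> m then u m * qW 1 c a b cr d m n else 0)"
  have S1W: "S1 \<subseteq> W" unfolding S1_def by auto
  have u_nn: "u m \<ge> 0" for m unfolding u_def by simp
  have usum: "u summable_on W"
    using summable_on_iff_abs_summable_on_real[THEN iffD1, OF esum] unfolding u_def W_def by simp
  have u0: "u m = 0" if "m \<in> W" "m \<notin> S1" for m
    using e0[of m] that unfolding u_def S1_def W_def by auto
  have qsm: "(\<lambda>n. qW 1 c a b cr d m n) summable_on (A - {m})" if "m \<in> W" "A \<subseteq> W" for m A
    using summable_on_subset[OF has_sum_imp_summable[OF qW_hs[of m]]] that unfolding W_def by blast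
  have row: "((\<lambda>n. G (m, n)) has_sum (u m * out1 m)) W" if m: "m \<in> W" for m
  proof -
    have "((\<lambda>n. u m * qW 1 c a b cr d m n) has_sum (u m * out1 m)) (S1 - {m})"
      unfolding out1_def by (intro has_sum_cmult_right has_sum_infsum qsm[OF m S1W])
    then show ?thesis
      by (rule has_sum_cong_neutral[THEN iffD1, rotated -1]) (use S1W in \<open>auto simp: G_def\<close>)
  qed
  have out1_le: "out1 m \<le> OUTc m" "out1 m \<ge> 0" if m: "m \<in> W" for m
  proof -
    have "out1 m \<le> (\<Sum>\<^sub>\<infinity>n\<in>W-{m}. qW 1 c a b cr d m n)"
      unfolding out1_def
      by (rule infsum_mono_neutral) (use qsm[OF m S1W] qsm[OF m order.refl] qW_nn S1W in auto)
    also have "\<dots> = OUTc m - exit_rate c a b cr d m"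
      using qW_hs[of m] m W_def by (simp add: infsumI)
    finally have "out1 m \<le> OUTc m - exit_rate c a b cr d m" .
    then show "out1 m \<le> OUTc m" using exit_nn[of m] m W_def by simp
    show "out1 m \<ge> 0" unfolding out1_def by (rule infsum_nonneg) (rule qW_nn)
  qed
  have uOUT_sum: "(\<lambda>m. u m * OUTc m) summable_on W"
    by (rule summable_on_comparison_test[OF summable_on_cmult_right[OF usum, of Bd]])
      (use OUTc_bound u_nn in \<open>auto simp: W_def mult.commute mult_left_mono\<close>)
  have uout1_sum: "(\<lambda>m. u m * out1 m) summable_on W"
    by (rule summable_on_comparison_test[OF uOUT_sum])
      (use out1_le u_nn in \<open>auto simp: mult_left_mono\<close>)
  have Gsum: "G summable_on Sigma W (\<lambda>_. W)"
    by (rule summable_on_SigmaI[OF row uout1_sum])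
      (auto simp: G_def intro!: mult_nonneg_nonneg u_nn qW_nn qW_nn[unfolded One_nat_def])
  obtain Stot where Stot: "(G has_sum Stot) (Sigma W (\<lambda>_. W))"
    using Gsum unfolding summable_on_def by blast
  have hs_out1: "((\<lambda>m. u m * out1 m) has_sum Stot) W"
    by (rule has_sum_Sigma'[OF Stot row])
  have col: "((\<lambda>m. G (m, n)) has_sum In n) W" if n: "n \<in> W" for n
  proof (cases "n \<in> S1")
    case True
    have ns: "n \<in> Wset c" "n 0 \<ge> 1" using True unfolding S1_def W_def by auto
    have "(\<lambda>m. e m * qW 1 c a b cr d m n) summable_on (W - {n})"
      using ebal[OF ns] unfolding W_def by (rule has_sum_imp_summable)
    then have "(\<lambda>m. \<bar>e m * qW 1 c a b cr d m n\<bar>) summable_on (W - {n})"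
      using summable_on_iff_abs_summable_on_real[THEN iffD1] by fastforce
    then have "(\<lambda>m. u m * qW 1 c a b cr d m n) summable_on (W - {n})"
      unfolding u_def abs_mult using qW_nn by (simp add: abs_of_nonneg)
    then have "((\<lambda>m. u m * qW 1 c a b cr d m n) has_sum In n) (W - {n})"
      unfolding In_def using True by (simp add: has_sum_infsum)
    then show ?thesis
      by (rule has_sum_cong_neutral[THEN iffD1, rotated -1]) (use True n in \<open>auto simp: G_def\<close>)
  next
    case False
    then show ?thesis unfolding In_def G_def by simp
  qed
  have Stot': "((\<lambda>(n, m). G (m, n)) has_sum Stot) (Sigma W (\<lambda>_. W))"
    using Stot has_sum_swap[where f=G and S=Stot and A=W and B=W] by simp
  have hs_In: "(In has_sum Stot) W"
    by (rule has_sum_Sigma'[OF Stot']) (use col in auto)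
  have In_ge: "In n \<ge> u n * OUTc n" if n: "n \<in> W" for n
  proof (cases "n \<in> S1")
    case True
    have ns: "n \<in> Wset c" "n 0 \<ge> 1" using True unfolding S1_def W_def by auto
    have hs: "((\<lambda>m. u m * qW 1 c a b cr d m n) has_sum In n) (W - {n})"
      using col[OF n] True
      by (subst (asm) has_sum_cong_neutral[where T="W - {n}" and g="\<lambda>m. u m * qW 1 c a b cr d m n"])
         (auto simp: G_def)
    have "norm (e n * OUTc n) \<le> In n"
      by (rule norm_infsum_le[OF ebal[OF ns] hs[unfolded W_def]])
         (auto simp: u_def abs_mult qW_nn)
    then show ?thesis unfolding u_def using OUTc_bound(2)[OF ns(1)] by (simp add: abs_mult)
  next
    case False
    then show ?thesis using u0[OF n] by (simp add: In_def)
  qed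
  obtain Tout where Tout: "((\<lambda>m. u m * OUTc m) has_sum Tout) W"
    using uOUT_sum unfolding summable_on_def by blast
  have "Stot \<le> Tout"
    by (rule has_sum_mono[OF hs_out1 Tout]) (use out1_le u_nn in \<open>auto simp: mult_left_mono\<close>)
  moreover have "Tout \<le> Stot"
    by (rule has_sum_mono[OF Tout hs_In]) (use In_ge in auto)
  ultimately have eqT: "Stot = Tout" by simp
  have d1: "((\<lambda>n. In n - u n * OUTc n) has_sum 0) W"
    using has_sum_diff_real[OF hs_In Tout] eqT by simp
  have d2: "((\<lambda>m. u m * OUTc m - u m * out1 m) has_sum 0) W"
    using has_sum_diff_real[OF Tout hs_out1] eqT by simp
  have InEq: "In n = u n * OUTc n" if "n \<in> W" for n
    using nonneg_has_sum_le_0D[OF d1 order.refl _ that] In_ge by auto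
  have leak0: "u m * OUTc m = u m * out1 m" if "m \<in> W" for m
    using nonneg_has_sum_le_0D[OF d2 order.refl _ that] out1_le u_nn
    by (auto simp: mult_left_mono)
  have no_exit: "exit_rate c a b cr d m = 0 \<and> (\<forall>n\<in>W - S1 - {m}. qW 1 c a b cr d m n = 0)"
    if m: "m \<in> S1" "u m \<noteq> 0" for m
  proof -
    have mW: "m \<in> W" using m S1W by auto
    have eqo: "OUTc m = out1 m" using leak0[OF mW] m(2) by simp
    have sm0: "(\<lambda>n. qW 1 c a b cr d m n) summable_on (W - S1 - {m})"
      using qsm[OF mW, of "W - S1"] by auto
    have "OUTc m - exit_rate c a b cr d m = (\<Sum>\<^sub>\<infinity>n\<in>W - {m}. qW 1 c a b cr d m n)"
      using qW_hs[of m] mW W_def by (simp add: infsumI)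
    also have "W - {m} = (S1 - {m}) \<union> (W - S1 - {m})" using S1W by auto
    also have "(\<Sum>\<^sub>\<infinity>n\<in>(S1 - {m}) \<union> (W - S1 - {m}). qW 1 c a b cr d m n) =
        out1 m + (\<Sum>\<^sub>\<infinity>n\<in>W - S1 - {m}. qW 1 c a b cr d m n)"
      unfolding out1_def by (rule infsum_Un_disjoint[OF qsm[OF mW S1W] sm0]) auto
    finally have e1: "exit_rate c a b cr d m + (\<Sum>\<^sub>\<infinity>n\<in>W - S1 - {m}. qW 1 c a b cr d m n) = 0"
      using eqo by simp
    have i0: "(\<Sum>\<^sub>\<infinity>n\<in>W - S1 - {m}. qW 1 c a b cr d m n) \<ge> 0" by (rule infsum_nonneg) (rule qW_nn)
    have ex0: "exit_rate c a b cr d m = 0" using e1 i0 exit_nn[of m] mW W_def by simp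
    have "(\<Sum>\<^sub>\<infinity>n\<in>W - S1 - {m}. qW 1 c a b cr d m n) = 0" using e1 ex0 by simp
    then have "qW 1 c a b cr d m n = 0" if "n \<in> W - S1 - {m}" for n
      using nonneg_infsum_le_0D[OF _ sm0 qW_nn that] by simp
    with ex0 show ?thesis by blast
  qed
  have inflow_zero: "u m * qW 1 c a b cr d m n = 0" if n: "n \<in> S1" "u n = 0" and m: "m \<in> W" "m \<noteq> n" for m n
  proof -
    have nW: "n \<in> W" using n S1W by auto
    have hs: "((\<lambda>m. u m * qW 1 c a b cr d m n) has_sum In n) (W - {n})"
      using col[OF nW] n(1)
      by (subst (asm) has_sum_cong_neutral[where T="W - {n}" and g="\<lambda>m. u m * qW 1 c a b cr d m n"])
         (auto simp: G_def)
    have "In n = 0" using InEq[OF nW] n by simp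
    then show ?thesis using nonneg_has_sum_le_0D[OF hs _ _, of m] m u_nn qW_nn by auto
  qed
  define good :: "'v + (nat \<Rightarrow> nat) \<Rightarrow> bool" where "good = (\<lambda>s. case s of Inl _ \<Rightarrow> True | Inr m \<Rightarrow> u m = 0)"
  define SS where "SS = state_space V c"
  have step: "good s" if st: "s \<in> SS" "t \<in> SS" "s \<noteq> t" "q s t > 0" and gt: "good t" for s t
  proof (cases s)
    case (Inl v) then show ?thesis unfolding good_def by simp
  next
    case (Inr m)
    have mW: "m \<in> W" using st(1) Inr unfolding SS_def state_space_def W_def by auto
    show ?thesis
    proof (rule ccontr)
      assume ng: "\<not> good s"
      then have um: "u m \<noteq> 0" using Inr unfolding good_def by simp
      then have mS1: "m \<in> S1" using u0[OF mW] by auto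
      note ne = no_exit[OF mS1 um]
      show False
      proof (cases t)
        case (Inl v)
        have vV: "v \<in> V" using st(2) Inl unfolding SS_def state_space_def by auto
        have "q (Inr m) (Inl v) \<le> (\<Sum>v'\<in>V. q (Inr m) (Inl v'))"
          by (rule member_le_sum[OF vV]) (use q_Inr_Inl_nn mW W_def mp_facts(1) in auto)
        then show False using ne mp_facts(4)[of m] mW st(4) Inr Inl W_def by simp
      next
        case (Inr n)
        have nW: "n \<in> W" using st(2) Inr unfolding SS_def state_space_def W_def by auto
        have mn: "m \<noteq> n" using st(3) Inr \<open>s = Inr m\<close> by simp
        have qpos: "qW 1 c a b cr d m n > 0"
          using st(4) mp_facts(3)[of m n] mW nW mn Inr \<open>s = Inr m\<close> W_def by simp
        show False
        proof (cases "n \<in> S1")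
          case True
          have "u n = 0" using gt Inr unfolding good_def by simp
          then have "u m * qW 1 c a b cr d m n = 0" using inflow_zero[OF True _ mW mn] by simp
          then show False using um qpos by simp
        next
          case False
          then show False using ne nW mn qpos by auto
        qed
      qed
    qed
  qed
  have irr: "\<And>s t. s \<in> SS \<Longrightarrow> t \<in> SS \<Longrightarrow>
      (\<lambda>x y. x \<in> SS \<and> y \<in> SS \<and> x \<noteq> y \<and> q x y > 0)\<^sup>*\<^sup>* s t"
    using mp_facts(6) unfolding irreducible_ctmc_def SS_def by blast
  define z0 :: "nat \<Rightarrow> nat" where "z0 = (\<lambda>_. 0)"
  have z0W: "z0 \<in> W" unfolding z0_def W_def Wset_def by auto
  have gz0: "good (Inr z0)" unfolding good_def using u0[OF z0W] S1_def z0_def by simp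
  fix n assume nW: "n \<in> Wset c"
  have path: "(\<lambda>x y. x \<in> SS \<and> y \<in> SS \<and> x \<noteq> y \<and> q x y > 0)\<^sup>*\<^sup>* (Inr n) (Inr z0)"
    by (rule irr) (use nW z0W in \<open>auto simp: SS_def state_space_def W_def\<close>)
  have "good (Inr n)"
    using path gz0
  proof (induction rule: converse_rtranclp_induct)
    case base then show ?case .
  next
    case (step y z)
    then show ?case using \<open>\<And>s t. s \<in> SS \<Longrightarrow> t \<in> SS \<Longrightarrow> s \<noteq> t \<Longrightarrow> q s t > 0 \<Longrightarrow> good t \<Longrightarrow> good s\<close>
      by blast
  qed
  then show "e n = 0" unfolding good_def u_def by simp
qed

end

lemma sum_prod_funs:
  fixes h :: "'i \<Rightarrow> 'b \<Rightarrow> 'c::comm_semiring_1"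
  assumes I: "finite I" and B: "finite B"
  shows "(\<Sum>f\<in>{f. \<forall>j. (j \<in> I \<longrightarrow> f j \<in> B) \<and> (j \<notin> I \<longrightarrow> f j = d)}. \<Prod>i\<in>I. h i (f i))
     = (\<Prod>i\<in>I. \<Sum>k\<in>B. h i k)"
proof -
  have "(\<Prod>i\<in>I. \<Sum>k\<in>B. h i k) = (\<Sum>g\<in>PiE I (\<lambda>_. B). \<Prod>i\<in>I. h i (g i))"
    by (rule prod_sum_PiE) (use I B in auto)
  also have "\<dots> = (\<Sum>f\<in>{f. \<forall>j. (j \<in> I \<longrightarrow> f j \<in> B) \<and> (j \<notin> I \<longrightarrow> f j = d)}. \<Prod>i\<in>I. h i (f i))"
  proof (rule sum.reindex_bij_witness[where i="\<lambda>f. restrict f I" and j="\<lambda>g j. if j \<in> I then g j else d"])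
    fix g assume g: "g \<in> PiE I (\<lambda>_. B)"
    show "restrict (\<lambda>j. if j \<in> I then g j else d) I = g"
      using g by (auto simp: fun_eq_iff PiE_def extensional_def)
    show "(\<lambda>j. if j \<in> I then g j else d) \<in> {f. \<forall>j. (j \<in> I \<longrightarrow> f j \<in> B) \<and> (j \<notin> I \<longrightarrow> f j = d)}"
      using g by auto
    show "(\<Prod>i\<in>I. h i (if i \<in> I then g i else d)) = (\<Prod>i\<in>I. h i (g i))"
      by (intro prod.cong) auto
  next
    fix f assume f: "f \<in> {f. \<forall>j. (j \<in> I \<longrightarrow> f j \<in> B) \<and> (j \<notin> I \<longrightarrow> f j = d)}"
    show "(\<lambda>j. if j \<in> I then restrict f I j else d) = f" using f by (auto simp: fun_eq_iff)
    show "restrict f I \<in> PiE I (\<lambda>_. B)" using f by auto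
  qed
  finally show ?thesis by simp
qed

context setting
begin

definition PH :: "(nat \<Rightarrow> nat) set" where "PH = {n \<in> Wset c. n 0 = 0}"

lemma PH_eq: "PH = {f. \<forall>j. (j \<in> {1..c} \<longrightarrow> f j \<in> {0,1}) \<and> (j \<notin> {1..c} \<longrightarrow> f j = 0)}"
proof (intro set_eqI iffI)
  fix f assume f: "f \<in> PH"
  have out: "j = 0 \<or> j > c" if "j \<notin> {1..c}" for j using that by auto
  show "f \<in> {f. \<forall>j. (j \<in> {1..c} \<longrightarrow> f j \<in> {0,1}) \<and> (j \<notin> {1..c} \<longrightarrow> f j = 0)}"
    unfolding mem_Collect_eq
  proof (intro allI conjI impI)
    fix j assume j: "j \<in> {1..c}"
    have "f j \<le> 1" using f j unfolding PH_def Wset_def by auto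
    then show "f j \<in> {0,1}" by auto
  next
    fix j assume j: "j \<notin> {1..c}"
    show "f j = 0" using out[OF j] f unfolding PH_def Wset_def by auto
  qed
next
  fix f :: "nat \<Rightarrow> nat" assume f: "f \<in> {f. \<forall>j. (j \<in> {1..c} \<longrightarrow> f j \<in> {0,1}) \<and> (j \<notin> {1..c} \<longrightarrow> f j = 0)}"
  then have "\<forall>i\<in>{1..c}. f i \<le> 1" by fastforce
  moreover have "\<forall>i>c. f i = 0" using f by auto
  moreover have "f 0 = 0" using f by auto
  ultimately show "f \<in> PH" unfolding PH_def Wset_def by auto
qed

lemma SV_eq: "sign_vectors c = {f. \<forall>j. (j \<in> {1..c} \<longrightarrow> f j \<in> {1,-1}) \<and> (j \<notin> {1..c} \<longrightarrow> f j = 0)}"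
  unfolding sign_vectors_def by auto

lemma finite_PH: "finite PH"
  unfolding PH_eq by (rule finite_set_of_finite_funs) auto

lemma finite_SV: "finite (sign_vectors c)"
  unfolding SV_eq by (rule finite_set_of_finite_funs) auto

lemma sum_PH_prod: fixes h :: "nat \<Rightarrow> nat \<Rightarrow> 'a::comm_semiring_1" shows "(\<Sum>f\<in>PH. \<Prod>i\<in>{1..c}. h i (f i)) = (\<Prod>i\<in>{1..c}. h i 0 + h i 1)"
  unfolding PH_eq using sum_prod_funs[where I="{1..c}" and B="{0,1::nat}" and d=0 and h=h] by simp

lemma card_PH: "card PH = 2 ^ c"
  using sum_PH_prod[of "\<lambda>_ _. 1::nat"] by (simp add: numeral_2_eq_2)

lemma card_SV: "card (sign_vectors c) = 2 ^ c"
proof -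
  have "(\<Sum>f\<in>sign_vectors c. \<Prod>i\<in>{1..c}. (\<lambda>_ _. 1::nat) i (f i)) = (\<Prod>i\<in>{1..c}. \<Sum>k\<in>{1,-1::real}. (1::nat))"
    unfolding SV_eq by (rule sum_prod_funs) auto
  then show ?thesis by (simp add: numeral_2_eq_2)
qed

lemma p_facts:
  shows "\<And>s. s \<in> state_space V c \<Longrightarrow> p s \<ge> 0" and "(p has_sum 1) (state_space V c)"
    and "\<And>s. s \<in> state_space V c \<Longrightarrow> (q s) summable_on (state_space V c - {s})"
    and "\<And>s. s \<in> state_space V c \<Longrightarrow> (\<lambda>t. p t * q t s) summable_on (state_space V c - {s})"
    and "\<And>s. s \<in> state_space V c \<Longrightarrow> p s * (\<Sum>\<^sub>\<infinity>t\<in>state_space V c - {s}. q s t) = (\<Sum>\<^sub>\<infinity>t\<in>state_space V c - {s}. p t * q t s)"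
  using eqd unfolding equilibrium_dist_def by auto

lemma p_summable: "(\<lambda>m. p (Inr m)) summable_on Wset c"
proof -
  have "p summable_on (Inr ` Wset c)"
    by (rule summable_on_subset[OF has_sum_imp_summable[OF p_facts(2)]]) (auto simp: state_space_def)
  then show ?thesis by (subst (asm) summable_on_reindex) (auto simp: o_def)
qed

lemma p_balance:
  assumes n: "n \<in> Wset c" "n 0 \<ge> 1"
  shows "((\<lambda>m. p (Inr m) * qW 1 c a b cr d m n) has_sum (p (Inr n) * OUTc n)) (Wset c - {n})"
proof -
  define S where "S = state_space V c"
  define s where "s = (Inr n :: 'v + (nat \<Rightarrow> nat))"
  have sS: "s \<in> S" unfolding s_def S_def state_space_def using n by auto
  have split: "S - {s} = Inl ` V \<union> Inr ` (Wset c - {n})"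
    unfolding S_def s_def state_space_def by auto
  have disj: "Inl ` V \<inter> Inr ` (Wset c - {n}) = {}" by auto
  have finV: "finite (Inl ` V)" using mp_facts(1) by simp
  note E1 = p_facts(3)[OF sS[unfolded S_def]] and E2 = p_facts(4)[OF sS[unfolded S_def]]
    and E3 = p_facts(5)[OF sS[unfolded S_def]]
  have sub: "Inr ` (Wset c - {n}) \<subseteq> S - {s}" using split by auto
  have E1r: "(q s) summable_on (Inr ` (Wset c - {n}))"
    by (rule summable_on_subset[OF E1[folded S_def] sub])
  have E2r: "(\<lambda>t. p t * q t s) summable_on (Inr ` (Wset c - {n}))"
    by (rule summable_on_subset[OF E2[folded S_def] sub])
  have qcong: "q (Inr m) (Inr n) = qW 1 c a b cr d m n" if "m \<in> Wset c" "m \<noteq> n" for m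
    using mp_facts(3)[of m n] that n by auto
  have qcong2: "q (Inr n) (Inr m) = qW 1 c a b cr d n m" if "m \<in> Wset c" "m \<noteq> n" for m
    using mp_facts(3)[of n m] that n by auto
  have L: "(\<Sum>\<^sub>\<infinity>t\<in>S - {s}. q s t) = OUTc n"
  proof -
    have "(\<Sum>\<^sub>\<infinity>t\<in>S - {s}. q s t) = (\<Sum>\<^sub>\<infinity>t\<in>Inl ` V. q s t) + (\<Sum>\<^sub>\<infinity>t\<in>Inr ` (Wset c - {n}). q s t)"
      unfolding split by (rule infsum_Un_disjoint[OF summable_on_finite[OF finV] E1r disj])
    also have "(\<Sum>\<^sub>\<infinity>t\<in>Inl ` V. q s t) = (\<Sum>v\<in>V. q s (Inl v))"
      by (subst infsum_finite[OF finV]) (simp add: sum.reindex inj_on_def)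
    also have "\<dots> = exit_rate c a b cr d n" unfolding s_def using mp_facts(4)[OF n(1)] .
    also have "(\<Sum>\<^sub>\<infinity>t\<in>Inr ` (Wset c - {n}). q s t) = (\<Sum>\<^sub>\<infinity>m\<in>Wset c - {n}. qW 1 c a b cr d n m)"
    proof -
    have "(\<Sum>\<^sub>\<infinity>t\<in>Inr ` (Wset c - {n}). q s t) = (\<Sum>\<^sub>\<infinity>m\<in>Wset c - {n}. q s (Inr m))"
      by (subst infsum_reindex) (auto simp: o_def)
    also have "\<dots> = (\<Sum>\<^sub>\<infinity>m\<in>Wset c - {n}. qW 1 c a b cr d n m)"
    proof (rule infsum_cong)
      fix m assume "m \<in> Wset c - {n}"
      then show "q s (Inr m) = qW 1 c a b cr d n m" unfolding s_def by (intro qcong2) auto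
    qed
    finally show ?thesis .
  qed
    finally show ?thesis using OUT_eq[OF n(1)] by simp
  qed
  have R0: "(\<Sum>\<^sub>\<infinity>t\<in>Inl ` V. p t * q t s) = 0"
    using mp_facts(5)[OF _ n(1) n(2)] by (subst infsum_finite[OF finV]) (simp add: sum.reindex inj_on_def s_def)
  have smr: "(\<lambda>m. p (Inr m) * qW 1 c a b cr d m n) summable_on (Wset c - {n})"
  proof -
    have "((\<lambda>t. p t * q t s) \<circ> Inr) summable_on (Wset c - {n})"
      using E2r by (subst (asm) summable_on_reindex) auto
    then show ?thesis by (rule summable_on_cong[THEN iffD1, rotated]) (simp add: s_def qcong)
  qed
  have R: "(\<Sum>\<^sub>\<infinity>t\<in>S - {s}. p t * q t s) = (\<Sum>\<^sub>\<infinity>m\<in>Wset c - {n}. p (Inr m) * qW 1 c a b cr d m n)"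
  proof -
    have "(\<Sum>\<^sub>\<infinity>t\<in>S - {s}. p t * q t s) = (\<Sum>\<^sub>\<infinity>t\<in>Inl ` V. p t * q t s) + (\<Sum>\<^sub>\<infinity>t\<in>Inr ` (Wset c - {n}). p t * q t s)"
      unfolding split by (rule infsum_Un_disjoint[OF summable_on_finite[OF finV] E2r disj])
    also have "(\<Sum>\<^sub>\<infinity>t\<in>Inr ` (Wset c - {n}). p t * q t s) = (\<Sum>\<^sub>\<infinity>m\<in>Wset c - {n}. p (Inr m) * qW 1 c a b cr d m n)"
    proof -
      have "(\<Sum>\<^sub>\<infinity>t\<in>Inr ` (Wset c - {n}). p t * q t s) = (\<Sum>\<^sub>\<infinity>m\<in>Wset c - {n}. p (Inr m) * q (Inr m) s)"
        by (subst infsum_reindex) (auto simp: o_def)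
      also have "\<dots> = (\<Sum>\<^sub>\<infinity>m\<in>Wset c - {n}. p (Inr m) * qW 1 c a b cr d m n)"
      proof (rule infsum_cong)
        fix m assume "m \<in> Wset c - {n}"
        then have "q (Inr m) s = qW 1 c a b cr d m n" unfolding s_def by (intro qcong) auto
        then show "p (Inr m) * q (Inr m) s = p (Inr m) * qW 1 c a b cr d m n" by (simp only:)
      qed
      finally show ?thesis .
    qed
    finally show ?thesis using R0 by simp
  qed
  have "(\<Sum>\<^sub>\<infinity>m\<in>Wset c - {n}. p (Inr m) * qW 1 c a b cr d m n) = p (Inr n) * OUTc n"
    using E3 L R unfolding S_def s_def by simp
  then show ?thesis using smr by (metis has_sum_infsum)
qed

lemma geom_summable: fixes z :: real assumes z: "0 \<le> z" "z < 1" shows "(\<lambda>m. z ^ m 0) summable_on Wset c"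
proof -
  have W: "Wset c = (\<Union>ph\<in>PH. range (\<lambda>l. ph(0 := l)))"
  proof
    show "Wset c \<subseteq> (\<Union>ph\<in>PH. range (\<lambda>l. ph(0 := l)))"
    proof
      fix n assume n: "n \<in> Wset c"
      have "n(0 := 0) \<in> PH" using n unfolding PH_def Wset_def by auto
      moreover have "n = (n(0 := 0))(0 := n 0)" by simp
      ultimately show "n \<in> (\<Union>ph\<in>PH. range (\<lambda>l. ph(0 := l)))" by blast
    qed
    show "(\<Union>ph\<in>PH. range (\<lambda>l. ph(0 := l))) \<subseteq> Wset c"
      unfolding PH_def Wset_def by auto
  qed
  have "(\<lambda>m. z ^ m 0) summable_on (\<Union>ph\<in>PH. range (\<lambda>l. ph(0 := l)))"
  proof (rule summable_on_finite_union_disjoint[where A=PH and B="\<lambda>ph. range (\<lambda>l. ph(0 := l))"])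
    show "finite PH" by (rule finite_PH)
  next
    fix ph assume "ph \<in> PH"
    have "(\<lambda>l. z ^ l) summable_on UNIV"
      by (rule summable_nonneg_imp_summable_on[OF summable_geometric]) (use z in auto)
    moreover have "inj (\<lambda>l. ph(0 := l))" by (auto simp: inj_def dest: fun_cong[where x=0])
    ultimately show "(\<lambda>m. z ^ m 0) summable_on range (\<lambda>l. ph(0 := l))"
      by (subst summable_on_reindex) (auto simp: o_def)
  next
    fix ph ph' assume "ph \<in> PH" "ph' \<in> PH" "ph \<noteq> ph'"
    then show "range (\<lambda>l. ph(0 := l)) \<inter> range (\<lambda>l. ph'(0 := l)) = {}"
      unfolding PH_def by (auto simp: fun_eq_iff) (metis fun_upd_apply)
  qed
  then show ?thesis using W by simp
qed

lemma Tc_summable: assumes x: "x \<in> sign_vectors c" shows "Tc x summable_on Wset c"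
proof -
  define K where "K = (\<Prod>i\<in>{1..c}. max 1 \<bar>bet x i\<bar>)"
  have z: "0 \<le> beta0 x" "beta0 x < 1" using roots x by auto
  have g: "(\<lambda>m. K * beta0 x ^ m 0) summable_on Wset c"
    by (rule summable_on_cmult_right[OF geom_summable[OF z]])
  have Kn: "K \<ge> 0" unfolding K_def by (intro prod_nonneg) auto
  have "(\<lambda>m. norm (K * beta0 x ^ m 0)) summable_on Wset c"
    using g z Kn by (simp add: abs_mult)
  then have "(\<lambda>m. norm (Tc x m)) summable_on Wset c"
  proof (rule Infinite_Sum.abs_summable_on_comparison_test[where g="\<lambda>m. K * beta0 x ^ m 0"])
    fix m assume m: "m \<in> Wset c"
    have "(\<Prod>i\<in>{1..c}. \<bar>bet x i\<bar> ^ m i) \<le> K"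
      unfolding K_def
    proof (rule prod_mono)
      fix i assume i: "i \<in> {1..c}"
      have "m i \<le> 1" using m i unfolding Wset_def by auto
      then have "m i = 0 \<or> m i = 1" by arith
      then show "0 \<le> \<bar>bet x i\<bar> ^ m i \<and> \<bar>bet x i\<bar> ^ m i \<le> max 1 \<bar>bet x i\<bar>" by auto
    qed
    then have "\<bar>Tc x m\<bar> \<le> beta0 x ^ m 0 * K"
      unfolding Tc_def abs_mult using z by (simp add: abs_prod power_abs mult_left_mono)
    then show "norm (Tc x m) \<le> norm (K * beta0 x ^ m 0)"
      using z Kn by (simp add: abs_mult mult.commute)
  qed
  then show ?thesis by (rule Infinite_Sum.abs_summable_summable)
qed

end

lemma geom_indep_aux:
  fixes g :: "'x \<Rightarrow> real"
  assumes "finite L"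
  shows "\<forall>X w. finite X \<longrightarrow> g ` X \<subseteq> L \<longrightarrow> (\<forall>m::nat. (\<Sum>x\<in>X. w x * g x ^ m) = 0) \<longrightarrow>
     (\<forall>\<mu>. (\<Sum>x\<in>{x\<in>X. g x = \<mu>}. w x) = 0)"
  using assms
proof (induction L rule: finite_induct)
  case empty
  then show ?case by auto
next
  case (insert \<nu> L)
  show ?case
  proof (intro allI impI)
    fix X :: "'x set" and w :: "'x \<Rightarrow> real" and \<mu> :: real
    assume X: "finite X" and gX: "g ` X \<subseteq> insert \<nu> L" and hm: "\<forall>m::nat. (\<Sum>x\<in>X. w x * g x ^ m) = 0"
    define X' where "X' = {x\<in>X. g x \<noteq> \<nu>}"
    define w' where "w' = (\<lambda>x. w x * (g x - \<nu>))"
    have X'f: "finite X'" using X unfolding X'_def by simp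
    have gX': "g ` X' \<subseteq> L" using gX unfolding X'_def by auto
    have hm': "\<forall>m::nat. (\<Sum>x\<in>X'. w' x * g x ^ m) = 0"
    proof
      fix m :: nat
      have "(\<Sum>x\<in>X'. w' x * g x ^ m) = (\<Sum>x\<in>X. w' x * g x ^ m)"
        unfolding X'_def w'_def by (rule sum.mono_neutral_left) (use X in auto)
      also have "\<dots> = (\<Sum>x\<in>X. w x * g x ^ Suc m) - \<nu> * (\<Sum>x\<in>X. w x * g x ^ m)"
        unfolding w'_def by (simp add: sum_distrib_left sum_subtractf[symmetric] algebra_simps)
      also have "\<dots> = 0" using hm[rule_format, of "Suc m"] hm[rule_format, of m] by (simp del: power_Suc)
      finally show "(\<Sum>x\<in>X'. w' x * g x ^ m) = 0" .
    qed
    have IH: "\<forall>\<mu>. (\<Sum>x\<in>{x\<in>X'. g x = \<mu>}. w' x) = 0"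
      using insert.IH X'f gX' hm' by blast
    have ne: "(\<Sum>x\<in>{x\<in>X. g x = \<mu>'}. w x) = 0" if "\<mu>' \<noteq> \<nu>" for \<mu>'
    proof -
      have eqs: "{x\<in>X'. g x = \<mu>'} = {x\<in>X. g x = \<mu>'}" unfolding X'_def using that by auto
      have "(\<Sum>x\<in>{x\<in>X'. g x = \<mu>'}. w' x) = (\<mu>' - \<nu>) * (\<Sum>x\<in>{x\<in>X. g x = \<mu>'}. w x)"
        unfolding eqs w'_def sum_distrib_left by (intro sum.cong) auto
      then show ?thesis using IH that by simp
    qed
    show "(\<Sum>x\<in>{x\<in>X. g x = \<mu>}. w x) = 0"
    proof (cases "\<mu> = \<nu>")
      case False then show ?thesis using ne by simp
    next
      case True
      have "(\<Sum>x\<in>X'. w x) = (\<Sum>y\<in>g ` X'. \<Sum>x\<in>{x\<in>X'. g x = y}. w x)"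
        by (rule sum.image_gen[OF X'f])
      also have "\<dots> = 0"
      proof (rule sum.neutral, rule ballI)
        fix y assume y: "y \<in> g ` X'"
        then have yn: "y \<noteq> \<nu>" unfolding X'_def by auto
        have "{x\<in>X'. g x = y} = {x\<in>X. g x = y}" unfolding X'_def using yn by auto
        then show "(\<Sum>x\<in>{x\<in>X'. g x = y}. w x) = 0" using ne[OF yn] by simp
      qed
      finally have s1: "(\<Sum>x\<in>X'. w x) = 0" .
      have "X = {x\<in>X. g x = \<nu>} \<union> X'" unfolding X'_def by auto
      then have "(\<Sum>x\<in>X. w x) = (\<Sum>x\<in>{x\<in>X. g x = \<nu>}. w x) + (\<Sum>x\<in>X'. w x)"
        by (metis (no_types, lifting) X X'f sum.union_disjoint finite_Un disjoint_iff mem_Collect_eq X'_def)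
      moreover have "(\<Sum>x\<in>X. w x) = 0" using hm[rule_format, of 0] by simp
      ultimately show ?thesis using s1 True by simp
    qed
  qed
qed

lemma geom_indep:
  fixes g w :: "'x \<Rightarrow> real"
  assumes "finite X" "\<And>m::nat. (\<Sum>x\<in>X. w x * g x ^ m) = 0"
  shows "(\<Sum>x\<in>{x\<in>X. g x = \<mu>}. w x) = 0"
  using geom_indep_aux[of "g ` X" g] assms by blast

lemma sum_fun_app: "(sum F A) y = (\<Sum>a\<in>A. F a y)"
  by (induction A rule: infinite_finite_induct) (auto simp: plus_fun_def zero_fun_def)

lemma square_solve:
  fixes v :: "'x \<Rightarrow> 'y \<Rightarrow> real" and f :: "'y \<Rightarrow> real"
  assumes X: "finite X" and Y: "finite Y" and card: "card X = card Y"
    and inj: "\<And>\<alpha>. (\<forall>y\<in>Y. (\<Sum>x\<in>X. \<alpha> x * v x y) = 0) \<Longrightarrow> (\<forall>x\<in>X. \<alpha> x = 0)"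
  shows "\<exists>\<alpha>. \<forall>y\<in>Y. f y = (\<Sum>x\<in>X. \<alpha> x * v x y)"
proof -
  interpret V: vector_space "\<lambda>(r::real) (g::'y \<Rightarrow> real) y. r * g y"
    by unfold_locales (auto simp: fun_eq_iff algebra_simps plus_fun_def)
  define vv where "vv = (\<lambda>x y. if y \<in> Y then v x y else 0)"
  define dd :: "'y \<Rightarrow> 'y \<Rightarrow> real" where "dd = (\<lambda>y0 y. if y = y0 then (1::real) else 0)"
  have inj_vv: "inj_on vv X"
  proof (rule inj_onI, rule ccontr)
    fix x1 x2 assume x: "x1 \<in> X" "x2 \<in> X" "vv x1 = vv x2" "x1 \<noteq> x2"
    define \<alpha> where "\<alpha> = (\<lambda>x. if x = x1 then 1 else if x = x2 then -1 else (0::real))"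
    have "\<forall>y\<in>Y. (\<Sum>x\<in>X. \<alpha> x * v x y) = 0"
    proof
      fix y assume y: "y \<in> Y"
      have e: "v x1 y = v x2 y" using fun_cong[OF x(3), of y] y unfolding vv_def by simp
      have "(\<Sum>x\<in>X. \<alpha> x * v x y) = (\<Sum>x\<in>{x1, x2}. \<alpha> x * v x y)"
        by (rule sum.mono_neutral_right) (use X x in \<open>auto simp: \<alpha>_def\<close>)
      also have "\<dots> = 0" using x(4) e by (simp add: \<alpha>_def)
      finally show "(\<Sum>x\<in>X. \<alpha> x * v x y) = 0" .
    qed
    then have "\<alpha> x1 = 0" using inj x(1) by blast
    then show False unfolding \<alpha>_def by simp
  qed
  have inj_dd: "inj_on dd Y"
  proof (rule inj_onI)
    fix y1 y2 assume "dd y1 = dd y2"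
    from fun_cong[OF this, of y1] show "y1 = y2" unfolding dd_def by (auto split: if_splits)
  qed
  define A where "A = vv ` X"
  define B where "B = dd ` Y"
  have finA: "finite A" and finB: "finite B" unfolding A_def B_def using X Y by auto
  have cardAB: "card A = card B"
    unfolding A_def B_def using card_image[OF inj_vv] card_image[OF inj_dd] card by simp
  have supp: "g \<in> V.span B" if g: "\<And>y. y \<notin> Y \<Longrightarrow> g y = 0" for g
  proof -
    have "g = (\<Sum>y0\<in>Y. (\<lambda>y. g y0 * dd y0 y))"
    proof
      fix y
      show "g y = (\<Sum>y0\<in>Y. (\<lambda>y. g y0 * dd y0 y)) y"
      proof -
        have "(\<Sum>y0\<in>Y. (\<lambda>y. g y0 * dd y0 y)) y = (\<Sum>a\<in>Y. if y = a then g a else 0)"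
          unfolding sum_fun_app dd_def by (intro sum.cong) auto
        also have "\<dots> = (if y \<in> Y then g y else 0)" by (rule sum.delta'[OF Y])
        finally show ?thesis using g[of y] by auto
      qed
    qed
    also have "\<dots> \<in> V.span B"
      by (intro V.span_sum V.span_scale V.span_base) (auto simp: B_def)
    finally show ?thesis .
  qed
  have AB: "A \<subseteq> V.span B" unfolding A_def by (auto intro!: supp simp: vv_def)
  have indA: "V.independent A"
  proof
    assume "V.dependent A"
    then obtain u where u: "\<exists>a\<in>A. u a \<noteq> 0" "(\<Sum>a\<in>A. (\<lambda>y. u a * a y)) = 0"
      using V.dependent_finite[OF finA] by blast
    have "\<forall>y\<in>Y. (\<Sum>x\<in>X. u (vv x) * v x y) = 0"
    proof
      fix y assume y: "y \<in> Y"
      have "0 = (\<Sum>a\<in>A. (\<lambda>y. u a * a y)) y" using u(2) by simp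
      also have "\<dots> = (\<Sum>a\<in>A. u a * a y)" by (rule sum_fun_app)
      also have "\<dots> = (\<Sum>x\<in>X. u (vv x) * vv x y)" unfolding A_def by (subst sum.reindex[OF inj_vv]) simp
      also have "\<dots> = (\<Sum>x\<in>X. u (vv x) * v x y)" using y by (simp add: vv_def)
      finally show "(\<Sum>x\<in>X. u (vv x) * v x y) = 0" by simp
    qed
    then have "\<forall>x\<in>X. u (vv x) = 0" by (rule inj)
    then show False using u(1) unfolding A_def by auto
  qed
  have BA: "V.span B \<subseteq> V.span A"
  proof
    fix b assume b: "b \<in> V.span B"
    show "b \<in> V.span A"
    proof (rule ccontr)
      assume nb: "b \<notin> V.span A"
      have ind: "V.independent (insert b A)" by (rule V.independent_insertI[OF nb indA])
      have sub: "insert b A \<subseteq> V.span B" using b AB by auto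
      have "card (insert b A) \<le> card B" using V.independent_span_bound[OF finB ind sub] by simp
      moreover have "b \<notin> A" using nb V.span_base by blast
      ultimately show False using finA cardAB by simp
    qed
  qed
  define f' where "f' = (\<lambda>y. if y \<in> Y then f y else 0)"
  have "f' \<in> V.span A" using BA supp[of f'] unfolding f'_def by auto
  then obtain u where u: "f' = (\<Sum>a\<in>A. (\<lambda>y. u a * a y))"
    using V.span_finite[OF finA] by auto
  show ?thesis
  proof (intro exI ballI)
    fix y assume y: "y \<in> Y"
    have "f y = f' y" using y unfolding f'_def by simp
    also have "\<dots> = (\<Sum>a\<in>A. u a * a y)" unfolding u by (rule sum_fun_app)
    also have "\<dots> = (\<Sum>x\<in>X. u (vv x) * vv x y)" unfolding A_def by (subst sum.reindex[OF inj_vv]) simp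
    also have "\<dots> = (\<Sum>x\<in>X. u (vv x) * v x y)" using y by (simp add: vv_def)
    finally show "f y = (\<Sum>x\<in>X. (\<lambda>x. u (vv x)) x * v x y)" .
  qed
qed


context setting
begin

lemma prod_indicator:
  assumes x: "x \<in> sign_vectors c" and y: "y \<in> sign_vectors c"
  shows "(\<Prod>i\<in>{1..c}. if x i = y i then 1 else 0) = (if x = y then (1::real) else 0)"
proof (cases "x = y")
  case True then show ?thesis by simp
next
  case False
  then obtain j where j: "x j \<noteq> y j" by (auto simp: fun_eq_iff)
  have "j \<in> {1..c}"
  proof (rule ccontr)
    assume "j \<notin> {1..c}"
    then have "x j = 0" "y j = 0" using x y unfolding sign_vectors_def by auto
    with j show False by simp
  qed
  then have "(\<Prod>i\<in>{1..c}. if x i = y i then 1 else 0) = (0::real)"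
    using j by (intro prod_zero) auto
  then show ?thesis using False by simp
qed

lemma tensor_indep:
  fixes t :: "nat \<Rightarrow> real \<Rightarrow> real" and \<alpha> :: "(nat \<Rightarrow> real) \<Rightarrow> real"
  assumes tne: "\<And>i. i \<in> {1..c} \<Longrightarrow> t i 1 \<noteq> t i (-1)"
    and G: "G \<subseteq> sign_vectors c"
    and h: "\<And>ph. ph \<in> PH \<Longrightarrow> (\<Sum>x\<in>G. \<alpha> x * (\<Prod>i\<in>{1..c}. t i (x i) ^ ph i)) = 0"
    and y: "y \<in> G"
  shows "\<alpha> y = 0"
proof -
  define w where "w = (\<lambda>i s (k::nat). (if k = 0 then (if s = 1 then - t i (-1) else t i 1) else s) / (t i 1 - t i (-1)))"
  have finG: "finite G" using G finite_SV finite_subset by auto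
  have yS: "y \<in> sign_vectors c" using y G by auto
  have key: "w i (y i) 0 * t i (x i) ^ 0 + w i (y i) 1 * t i (x i) ^ 1 = (if x i = y i then 1 else 0)"
    if x: "x \<in> sign_vectors c" and i: "i \<in> {1..c}" for x i
  proof -
    have d: "t i 1 - t i (-1) \<noteq> 0" using tne[OF i] by simp
    have "w i (y i) 0 * t i (x i) ^ 0 + w i (y i) 1 * t i (x i) ^ 1 =
        ((if y i = 1 then - t i (-1) else t i 1) + y i * t i (x i)) / (t i 1 - t i (-1))"
      unfolding w_def by (simp add: add_divide_distrib)
    also have "\<dots> = (if x i = y i then 1 else 0)"
      using sv_val[OF x i] sv_val[OF yS i] d by auto
    finally show ?thesis .
  qed
  have inner: "(\<Sum>ph\<in>PH. \<Prod>i\<in>{1..c}. w i (y i) (ph i) * t i (x i) ^ ph i) = (if x = y then 1 else 0)"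
    if x: "x \<in> sign_vectors c" for x
  proof -
    have "(\<Sum>ph\<in>PH. \<Prod>i\<in>{1..c}. w i (y i) (ph i) * t i (x i) ^ ph i)
        = (\<Prod>i\<in>{1..c}. w i (y i) 0 * t i (x i) ^ 0 + w i (y i) 1 * t i (x i) ^ 1)"
      by (rule sum_PH_prod)
    also have "\<dots> = (\<Prod>i\<in>{1..c}. if x i = y i then 1 else 0)"
      by (intro prod.cong refl key[OF x])
    also have "\<dots> = (if x = y then 1 else 0)" by (rule prod_indicator[OF x yS])
    finally show ?thesis .
  qed
  have "0 = (\<Sum>ph\<in>PH. (\<Prod>i\<in>{1..c}. w i (y i) (ph i)) * (\<Sum>x\<in>G. \<alpha> x * (\<Prod>i\<in>{1..c}. t i (x i) ^ ph i)))"
    using h by simp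
  also have "\<dots> = (\<Sum>ph\<in>PH. \<Sum>x\<in>G. \<alpha> x * (\<Prod>i\<in>{1..c}. w i (y i) (ph i) * t i (x i) ^ ph i))"
    by (simp add: sum_distrib_left prod.distrib mult_ac)
  also have "\<dots> = (\<Sum>x\<in>G. \<Sum>ph\<in>PH. \<alpha> x * (\<Prod>i\<in>{1..c}. w i (y i) (ph i) * t i (x i) ^ ph i))"
    by (rule sum.swap)
  also have "\<dots> = (\<Sum>x\<in>G. \<alpha> x * (if x = y then 1 else 0))"
    using inner G by (simp add: sum_distrib_left[symmetric] subset_iff)
  also have "\<dots> = \<alpha> y" using finG y by (simp add: if_distrib sum.delta cong: if_cong)
  finally show ?thesis by simp
qed

lemma f_props:
  fixes \<alpha> :: "(nat \<Rightarrow> real) \<Rightarrow> real"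
  defines "f \<equiv> (\<lambda>m. \<Sum>x\<in>sign_vectors c. \<alpha> x * Tc x m)"
  shows "(f has_sum (\<Sum>x\<in>sign_vectors c. \<alpha> x * infsum (Tc x) (Wset c))) (Wset c)"
    and "\<And>n. n \<in> Wset c \<Longrightarrow> n 0 \<ge> 1 \<Longrightarrow> ((\<lambda>m. f m * qW 1 c a b cr d m n) has_sum (f n * OUTc n)) (Wset c - {n})"
proof -
  show "(f has_sum (\<Sum>x\<in>sign_vectors c. \<alpha> x * infsum (Tc x) (Wset c))) (Wset c)"
    unfolding f_def
    by (intro has_sum_sum_fin finite_SV has_sum_cmult_right has_sum_infsum Tc_summable)
  fix n assume n: "n \<in> Wset c" "n 0 \<ge> 1"
  have "((\<lambda>m. \<Sum>x\<in>sign_vectors c. \<alpha> x * (Tc x m * qW 1 c a b cr d m n)) has_sum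
      (\<Sum>x\<in>sign_vectors c. \<alpha> x * (Tc x n * OUTc n))) (Wset c - {n})"
    by (intro has_sum_sum_fin finite_SV has_sum_cmult_right cand_balance n)
  moreover have "\<And>m. f m * qW 1 c a b cr d m n = (\<Sum>x\<in>sign_vectors c. \<alpha> x * (Tc x m * qW 1 c a b cr d m n))"
    unfolding f_def by (simp add: sum_distrib_right mult.assoc)
  moreover have "f n * OUTc n = (\<Sum>x\<in>sign_vectors c. \<alpha> x * (Tc x n * OUTc n))"
    unfolding f_def by (simp add: sum_distrib_right mult.assoc)
  ultimately show "((\<lambda>m. f m * qW 1 c a b cr d m n) has_sum (f n * OUTc n)) (Wset c - {n})"
    by simp
qed

lemma Tc_level: "Tc x (ph(0 := l)) = beta0 x ^ l * (\<Prod>i\<in>{1..c}. bet x i ^ ph i)"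
proof -
  have "(\<Prod>i\<in>{1..c}. bet x i ^ (ph(0 := l)) i) = (\<Prod>i\<in>{1..c}. bet x i ^ ph i)"
    by (rule prod.cong) auto
  then show ?thesis unfolding Tc_def by simp
qed

lemma inj_alpha:
  fixes \<alpha> :: "(nat \<Rightarrow> real) \<Rightarrow> real"
  assumes h: "\<forall>ph\<in>PH. (\<Sum>x\<in>sign_vectors c. \<alpha> x * Tc x ph) = 0"
  shows "\<forall>x\<in>sign_vectors c. \<alpha> x = 0"
proof
  define f where "f = (\<lambda>m. \<Sum>x\<in>sign_vectors c. \<alpha> x * Tc x m)"
  have s1: "f summable_on Wset c" using f_props(1)[of \<alpha>] unfolding f_def by (rule has_sum_imp_summable)
  have s2: "\<And>n. n \<in> Wset c \<Longrightarrow> n 0 = 0 \<Longrightarrow> f n = 0" using h unfolding f_def PH_def by auto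
  have s3: "\<And>n. n \<in> Wset c \<Longrightarrow> 1 \<le> n 0 \<Longrightarrow> ((\<lambda>m. f m * qW 1 c a b cr d m n) has_sum f n * OUTc n) (Wset c - {n})"
    unfolding f_def by (rule f_props(2))
  have f0: "\<And>n. n \<in> Wset c \<Longrightarrow> f n = 0" using uniqueness[of f, OF s1 s2 s3] by blast
  fix y assume y: "y \<in> sign_vectors c"
  define lam0 where "lam0 = beta0 y"
  have lam: "0 < lam0" "lam0 \<le> 1" using roots y unfolding lam0_def by auto
  define t where "t = (\<lambda>i s. (Ffun 1 a b cr d i lam0 + s * Rfun 1 a b cr d i lam0) / (2 * genf 1 d i lam0))"
  define G where "G = {x \<in> sign_vectors c. beta0 x = lam0}"
  have betG: "bet x i = t i (x i)" if "x \<in> G" for x i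
    using that unfolding G_def bet_def t_def by simp
  have tne: "t i 1 \<noteq> t i (-1)" if i: "i \<in> {1..c}" for i
  proof -
    have A: "genf 1 a i lam0 > 0" and D: "genf 1 d i lam0 > 0" using genf_pos[OF i lam] by auto
    have "(Ffun 1 a b cr d i lam0)\<^sup>2 + 4 * genf 1 a i lam0 * genf 1 d i lam0 > 0"
      using A D by (simp add: add_nonneg_pos)
    then have R: "Rfun 1 a b cr d i lam0 > 0" unfolding Rfun_def by simp
    have "t i 1 - t i (-1) = Rfun 1 a b cr d i lam0 / genf 1 d i lam0"
      unfolding t_def using D by (simp add: field_simps)
    then show ?thesis using R D by auto
  qed
  have hG: "(\<Sum>x\<in>G. \<alpha> x * (\<Prod>i\<in>{1..c}. t i (x i) ^ ph i)) = 0" if ph: "ph \<in> PH" for ph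
  proof -
    have "\<forall>m::nat. (\<Sum>x\<in>sign_vectors c. (\<alpha> x * (\<Prod>i\<in>{1..c}. bet x i ^ ph i)) * beta0 x ^ m) = 0"
    proof
      fix l :: nat
      have W: "ph(0 := l) \<in> Wset c" using ph unfolding PH_def Wset_def by auto
      have "0 = f (ph(0 := l))" using f0[OF W] by simp
      also have "\<dots> = (\<Sum>x\<in>sign_vectors c. (\<alpha> x * (\<Prod>i\<in>{1..c}. bet x i ^ ph i)) * beta0 x ^ l)"
        unfolding f_def by (intro sum.cong refl) (simp add: Tc_level mult_ac)
      finally show "(\<Sum>x\<in>sign_vectors c. (\<alpha> x * (\<Prod>i\<in>{1..c}. bet x i ^ ph i)) * beta0 x ^ l) = 0" by simp
    qed
    then have "(\<Sum>x\<in>{x\<in>sign_vectors c. beta0 x = lam0}. \<alpha> x * (\<Prod>i\<in>{1..c}. bet x i ^ ph i)) = 0"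
      by (intro geom_indep finite_SV) blast
    then show ?thesis unfolding G_def[symmetric] using betG by (simp cong: sum.cong)
  qed
  show "\<alpha> y = 0"
    by (rule tensor_indep[where t=t and G=G and \<alpha>=\<alpha>]) (use tne hG in \<open>auto simp: G_def y lam0_def\<close>)
qed

lemma main_result:
  "\<exists>\<alpha> :: (nat \<Rightarrow> real) \<Rightarrow> real. \<forall>n\<in>Wset c.
           p (Inr n) = (\<Sum>x\<in>sign_vectors c. \<alpha> x * beta0 x ^ n 0 *
              (\<Prod>i\<in>{1..c}. ((Ffun 1 a b cr d i (beta0 x) + x i * Rfun 1 a b cr d i (beta0 x))
                               / (2 * genf 1 d i (beta0 x))) ^ n i))"
proof -
  obtain \<alpha> where \<alpha>: "\<forall>ph\<in>PH. p (Inr ph) = (\<Sum>x\<in>sign_vectors c. \<alpha> x * Tc x ph)"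
    using square_solve[OF finite_SV finite_PH, of "\<lambda>x ph. Tc x ph" "\<lambda>ph. p (Inr ph)"]
      card_SV card_PH inj_alpha by auto
  define f where "f = (\<lambda>m. \<Sum>x\<in>sign_vectors c. \<alpha> x * Tc x m)"
  define e where "e = (\<lambda>m. p (Inr m) - f m)"
  have fs: "f summable_on Wset c" using f_props(1)[of \<alpha>] unfolding f_def by (rule has_sum_imp_summable)
  obtain P where P: "((\<lambda>m. p (Inr m)) has_sum P) (Wset c)" using p_summable unfolding summable_on_def by blast
  obtain F where F: "(f has_sum F) (Wset c)" using fs unfolding summable_on_def by blast
  have s1: "e summable_on Wset c" unfolding e_def using has_sum_diff_real[OF P F] by (rule has_sum_imp_summable)
  have s2: "\<And>n. n \<in> Wset c \<Longrightarrow> n 0 = 0 \<Longrightarrow> e n = 0" using \<alpha> unfolding e_def f_def PH_def by auto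
  have s3: "((\<lambda>m. e m * qW 1 c a b cr d m n) has_sum e n * OUTc n) (Wset c - {n})"
    if n: "n \<in> Wset c" "1 \<le> n 0" for n
  proof -
    have fb: "((\<lambda>m. f m * qW 1 c a b cr d m n) has_sum (f n * OUTc n)) (Wset c - {n})"
      unfolding f_def by (rule f_props(2)[OF n])
    have "((\<lambda>m. p (Inr m) * qW 1 c a b cr d m n - f m * qW 1 c a b cr d m n) has_sum
        (p (Inr n) * OUTc n - f n * OUTc n)) (Wset c - {n})"
      by (rule has_sum_diff_real[OF p_balance[OF n] fb])
    then show ?thesis
      unfolding e_def by (simp add: left_diff_distrib)
  qed
  have e0: "\<And>n. n \<in> Wset c \<Longrightarrow> e n = 0" using uniqueness[of e, OF s1 s2 s3] by blast
  show ?thesis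
  proof (intro exI ballI)
    fix n assume n: "n \<in> Wset c"
    have "p (Inr n) = f n" using e0[OF n] unfolding e_def by simp
    then show "p (Inr n) = (\<Sum>x\<in>sign_vectors c. \<alpha> x * beta0 x ^ n 0 *
              (\<Prod>i\<in>{1..c}. ((Ffun 1 a b cr d i (beta0 x) + x i * Rfun 1 a b cr d i (beta0 x))
                               / (2 * genf 1 d i (beta0 x))) ^ n i))"
      unfolding f_def Tc_def bet_def by (simp add: mult.assoc)
  qed
qed

end

theorem theorem1:
  fixes c :: nat and V :: "'v set"
    and a b cr d :: "int \<Rightarrow> nat \<Rightarrow> real"
    and q :: "'v + (nat \<Rightarrow> nat) \<Rightarrow> 'v + (nat \<Rightarrow> nat) \<Rightarrow> real"
    and p :: "'v + (nat \<Rightarrow> nat) \<Rightarrow> real"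
    and beta0 :: "(nat \<Rightarrow> real) \<Rightarrow> real"
  assumes "c \<ge> 1"
    and "model_process 1 c V a b cr d q"
    and "assumption_A 1 c a b cr d"
    and "ergodic_cond 1 c a b cr d"
    and "equilibrium_dist (state_space V c) q p"
    and "\<forall>x\<in>sign_vectors c. 0 < beta0 x \<and> beta0 x < 1 \<and> Efun 1 c a b cr d x (beta0 x) = 0"
  shows "\<exists>\<alpha> :: (nat \<Rightarrow> real) \<Rightarrow> real. \<forall>n\<in>Wset c.
           p (Inr n) = (\<Sum>x\<in>sign_vectors c. \<alpha> x * beta0 x ^ n 0 *
              (\<Prod>i\<in>{1..c}. ((Ffun 1 a b cr d i (beta0 x) + x i * Rfun 1 a b cr d i (beta0 x))
                               / (2 * genf 1 d i (beta0 x))) ^ n i))"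
proof -
  interpret setting c V a b cr d q p beta0
    by unfold_locales (use assms in auto)
  show ?thesis by (rule main_result)
qed


end
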